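(* Let $R$ be a commutative noetherian ring, $\mathfrak{a}$ an ideal contained in the Jacobson radical of $R$, and $M$ a finitely generated $R$-module. Then among the $\mathfrak{a}$-adically complete $R$-submodules of $M$ there is a unique maximal one (with respect to inclusion).
   Context: A module $N$ is $\mathfrak{a}$-adically complete if the natural map $N\to \varprojlim_n N/\mathfrak{a}^nN$ is an isomorphism. The unique maximal $\mathfrak{a}$-adically complete submodule of $M$ is denoted $C_{\mathfrak{a}}(M)$ (the analytic conductor of $M$). *)

theory Defs
  imports "HOL-Algebra.Module" "HOL-Algebra.Ring_Divisibility"
begin

definition jacobson_radical :: "('a, 'c) ring_scheme \<Rightarrow> 'a set" where
  "jacobson_radical R = carrier R \<inter> \<Inter> {m. maximalideal m R}"

definition submod_span :: "('a, 'c) ring_scheme \<Rightarrow> ('a, 'b, 'd) module_scheme \<Rightarrow> 'b set \<Rightarrow> 'b set" where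
  "submod_span R M S = \<Inter> {H. submodule H R M \<and> S \<subseteq> H}"

definition finitely_generated_module :: "('a, 'c) ring_scheme \<Rightarrow> ('a, 'b, 'd) module_scheme \<Rightarrow> bool" where
  "finitely_generated_module R M \<longleftrightarrow>
     (\<exists>S. finite S \<and> S \<subseteq> carrier M \<and> submod_span R M S = carrier M)"

definition ideal_smult_submod :: "('a, 'c) ring_scheme \<Rightarrow> ('a, 'b, 'd) module_scheme \<Rightarrow> 'a set \<Rightarrow> 'b set \<Rightarrow> 'b set" where
  "ideal_smult_submod R M I N = submod_span R M {r \<odot>\<^bsub>M\<^esub> x | r x. r \<in> I \<and> x \<in> N}"

fun adic_pow :: "('a, 'c) ring_scheme \<Rightarrow> ('a, 'b, 'd) module_scheme \<Rightarrow> 'a set \<Rightarrow> 'b set \<Rightarrow> nat \<Rightarrow> 'b set" where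
  "adic_pow R M I N 0 = N"
| "adic_pow R M I N (Suc n) = ideal_smult_submod R M I (adic_pow R M I N n)"

text \<open>N is I-adically complete: the natural map N \<rightarrow> lim N/I^n N is bijective.
  Injectivity: the intersection of the I^n N is zero.  Surjectivity: every element
  of the inverse limit, i.e. every compatible sequence of cosets x_n + I^n N
  (given by representatives x_n with x_(n+1) - x_n in I^n N), comes from an element of N.\<close>
definition adically_complete :: "('a, 'c) ring_scheme \<Rightarrow> ('a, 'b, 'd) module_scheme \<Rightarrow> 'a set \<Rightarrow> 'b set \<Rightarrow> bool" where
  "adically_complete R M I N \<longleftrightarrow>
     (\<Inter>n. adic_pow R M I N n) = {\<zero>\<^bsub>M\<^esub>} \<and>
     (\<forall>x. (\<forall>n. x n \<in> N) \<and> (\<forall>n. x (Suc n) \<ominus>\<^bsub>M\<^esub> x n \<in> adic_pow R M I N n) \<longrightarrow>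
        (\<exists>y\<in>N. \<forall>n. y \<ominus>\<^bsub>M\<^esub> x n \<in> adic_pow R M I N n))"

end

theory Submission
  imports Defs
begin


definition msum :: "('a, 'b, 'd) module_scheme \<Rightarrow> 'b set \<Rightarrow> 'b set \<Rightarrow> 'b set" where
  "msum M A B = {a \<oplus>\<^bsub>M\<^esub> b | a b. a \<in> A \<and> b \<in> B}"

context module begin

lemma sub_zero: "submodule H R M \<Longrightarrow> \<zero>\<^bsub>M\<^esub> \<in> H"
proof -
  assume H: "submodule H R M"
  then obtain a where a: "a \<in> H" using submoduleE(2) by blast
  then have "a \<oplus>\<^bsub>M\<^esub> \<ominus>\<^bsub>M\<^esub> a \<in> H" using submoduleE(3,5)[OF H] by blast
  moreover have "a \<in> carrier M" using a submoduleE(1)[OF H] by blast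
  ultimately show ?thesis by (metis M.r_neg)
qed

lemma span_submodule:
  assumes "S \<subseteq> carrier M"
  shows "submodule (submod_span R M S) R M"
proof -
  let ?F = "{H. submodule H R M \<and> S \<subseteq> H}"
  have ne: "carrier M \<in> ?F" using carrier_is_submodule assms by auto
  show ?thesis unfolding submod_span_def
  proof (rule submoduleI)
    show "\<Inter>?F \<subseteq> carrier M" using ne by auto
    show "\<zero>\<^bsub>M\<^esub> \<in> \<Inter>?F" using sub_zero by auto
    show "\<And>a. a \<in> \<Inter>?F \<Longrightarrow> \<ominus>\<^bsub>M\<^esub> a \<in> \<Inter>?F" using submoduleE(3) by auto
    show "\<And>a b. a \<in> \<Inter>?F \<Longrightarrow> b \<in> \<Inter>?F \<Longrightarrow> a \<oplus>\<^bsub>M\<^esub> b \<in> \<Inter>?F" using submoduleE(5) by auto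
    show "\<And>a x. a \<in> carrier R \<Longrightarrow> x \<in> \<Inter>?F \<Longrightarrow> a \<odot>\<^bsub>M\<^esub> x \<in> \<Inter>?F" using submoduleE(4) by auto
  qed
qed

lemma span_sup: "S \<subseteq> submod_span R M S"
  unfolding submod_span_def by auto

lemma span_min: "submodule H R M \<Longrightarrow> S \<subseteq> H \<Longrightarrow> submod_span R M S \<subseteq> H"
  unfolding submod_span_def by auto


lemma sub_carrier: "submodule H R M \<Longrightarrow> H \<subseteq> carrier M"
  using submoduleE(1) by auto

lemma sub_minus: "submodule H R M \<Longrightarrow> a \<in> H \<Longrightarrow> b \<in> H \<Longrightarrow> a \<ominus>\<^bsub>M\<^esub> b \<in> H"
  unfolding a_minus_def using submoduleE(3,5) by auto

lemma scalar_span: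
  assumes W: "submodule W R M" and a: "a \<in> carrier R" and U: "U \<subseteq> carrier M"
    and h: "\<And>u. u \<in> U \<Longrightarrow> a \<odot>\<^bsub>M\<^esub> u \<in> W" and x: "x \<in> submod_span R M U"
  shows "a \<odot>\<^bsub>M\<^esub> x \<in> W"
proof -
  let ?H = "{x \<in> carrier M. a \<odot>\<^bsub>M\<^esub> x \<in> W}"
  have "submodule ?H R M"
  proof (rule submoduleI)
    show "?H \<subseteq> carrier M" by blast
    have "a \<odot>\<^bsub>M\<^esub> \<zero>\<^bsub>M\<^esub> = \<zero>\<^bsub>M\<^esub>" using a by (rule smult_r_null)
    then show "\<zero>\<^bsub>M\<^esub> \<in> ?H" using sub_zero[OF W] by simp
  next
    fix b assume b: "b \<in> ?H"
    then have bc: "b \<in> carrier M" and bW: "a \<odot>\<^bsub>M\<^esub> b \<in> W" by auto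
    have "a \<odot>\<^bsub>M\<^esub> (\<ominus>\<^bsub>M\<^esub> b) = \<ominus>\<^bsub>M\<^esub> (a \<odot>\<^bsub>M\<^esub> b)" by (rule smult_r_minus[OF a bc])
    moreover have "\<ominus>\<^bsub>M\<^esub> (a \<odot>\<^bsub>M\<^esub> b) \<in> W" by (rule submoduleE(3)[OF W bW])
    ultimately show "\<ominus>\<^bsub>M\<^esub> b \<in> ?H" using bc by simp
  next
    fix b c assume b: "b \<in> ?H" and c: "c \<in> ?H"
    then have bc: "b \<in> carrier M" "c \<in> carrier M" and bW: "a \<odot>\<^bsub>M\<^esub> b \<in> W" "a \<odot>\<^bsub>M\<^esub> c \<in> W" by auto
    have "a \<odot>\<^bsub>M\<^esub> (b \<oplus>\<^bsub>M\<^esub> c) = a \<odot>\<^bsub>M\<^esub> b \<oplus>\<^bsub>M\<^esub> a \<odot>\<^bsub>M\<^esub> c" by (rule smult_r_distr[OF a bc])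
    moreover have "a \<odot>\<^bsub>M\<^esub> b \<oplus>\<^bsub>M\<^esub> a \<odot>\<^bsub>M\<^esub> c \<in> W" by (rule submoduleE(5)[OF W bW])
    ultimately show "b \<oplus>\<^bsub>M\<^esub> c \<in> ?H" using bc by simp
  next
    fix c y assume c: "c \<in> carrier R" and y: "y \<in> ?H"
    then have yc: "y \<in> carrier M" and yW: "a \<odot>\<^bsub>M\<^esub> y \<in> W" by auto
    have "a \<odot>\<^bsub>M\<^esub> (c \<odot>\<^bsub>M\<^esub> y) = (a \<otimes>\<^bsub>R\<^esub> c) \<odot>\<^bsub>M\<^esub> y" by (rule smult_assoc1[OF a c yc, symmetric])
    also have "\<dots> = (c \<otimes>\<^bsub>R\<^esub> a) \<odot>\<^bsub>M\<^esub> y" using R.m_comm[OF a c] by simp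
    also have "\<dots> = c \<odot>\<^bsub>M\<^esub> (a \<odot>\<^bsub>M\<^esub> y)" by (rule smult_assoc1[OF c a yc])
    finally have "a \<odot>\<^bsub>M\<^esub> (c \<odot>\<^bsub>M\<^esub> y) \<in> W" using submoduleE(4)[OF W c yW] by simp
    then show "c \<odot>\<^bsub>M\<^esub> y \<in> ?H" using c yc by simp
  qed
  moreover have "U \<subseteq> ?H" using U h by auto
  ultimately show ?thesis using span_min x by blast
qed

abbreviation Phi where "Phi I X \<equiv> ideal_smult_submod R M I X"

lemma gens_carrier: "I \<subseteq> carrier R \<Longrightarrow> X \<subseteq> carrier M \<Longrightarrow>
  {r \<odot>\<^bsub>M\<^esub> x | r x. r \<in> I \<and> x \<in> X} \<subseteq> carrier M"
  using smult_closed by blast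

lemma Phi_submodule: "I \<subseteq> carrier R \<Longrightarrow> X \<subseteq> carrier M \<Longrightarrow> submodule (Phi I X) R M"
proof -
  assume "I \<subseteq> carrier R" "X \<subseteq> carrier M"
  then have "{r \<odot>\<^bsub>M\<^esub> x | r x. r \<in> I \<and> x \<in> X} \<subseteq> carrier M" by (rule gens_carrier)
  then show ?thesis unfolding ideal_smult_submod_def by (rule span_submodule)
qed

lemma Phi_gen: "r \<in> I \<Longrightarrow> x \<in> X \<Longrightarrow> r \<odot>\<^bsub>M\<^esub> x \<in> Phi I X"
proof -
  assume "r \<in> I" "x \<in> X"
  then have "r \<odot>\<^bsub>M\<^esub> x \<in> {r \<odot>\<^bsub>M\<^esub> x | r x. r \<in> I \<and> x \<in> X}" by blast
  then show ?thesis unfolding ideal_smult_submod_def by (rule subsetD[OF span_sup])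
qed

lemma Phi_le: "submodule W R M \<Longrightarrow> (\<And>r x. r \<in> I \<Longrightarrow> x \<in> X \<Longrightarrow> r \<odot>\<^bsub>M\<^esub> x \<in> W) \<Longrightarrow> Phi I X \<subseteq> W"
  unfolding ideal_smult_submod_def by (rule span_min) blast+

lemma Phi_sub: "submodule X R M \<Longrightarrow> I \<subseteq> carrier R \<Longrightarrow> Phi I X \<subseteq> X"
proof (rule Phi_le)
  fix r x assume "submodule X R M" "I \<subseteq> carrier R" "r \<in> I" "x \<in> X"
  then show "r \<odot>\<^bsub>M\<^esub> x \<in> X" using submoduleE(4) by blast
qed

lemma Phi_mono: "I \<subseteq> carrier R \<Longrightarrow> Y \<subseteq> carrier M \<Longrightarrow> X \<subseteq> Y \<Longrightarrow> Phi I X \<subseteq> Phi I Y"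
proof (rule Phi_le)
  assume a: "I \<subseteq> carrier R" "Y \<subseteq> carrier M" "X \<subseteq> Y"
  show "submodule (Phi I Y) R M" by (rule Phi_submodule[OF a(1,2)])
  fix r x assume "r \<in> I" "x \<in> X"
  then show "r \<odot>\<^bsub>M\<^esub> x \<in> Phi I Y" using Phi_gen \<open>X \<subseteq> Y\<close> by blast
qed

lemma Phi_span:
  assumes I: "I \<subseteq> carrier R" and U: "U \<subseteq> carrier M" and W: "submodule W R M"
    and h: "\<And>r u. r \<in> I \<Longrightarrow> u \<in> U \<Longrightarrow> r \<odot>\<^bsub>M\<^esub> u \<in> W"
  shows "Phi I (submod_span R M U) \<subseteq> W"
proof (rule Phi_le[OF W])
  fix r x assume r: "r \<in> I" and x: "x \<in> submod_span R M U"
  have rc: "r \<in> carrier R" using r I by blast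
  show "r \<odot>\<^bsub>M\<^esub> x \<in> W" by (rule scalar_span[OF W rc U h[OF r] x])
qed

lemma adic_submodule: "submodule N R M \<Longrightarrow> I \<subseteq> carrier R \<Longrightarrow> submodule (adic_pow R M I N n) R M"
proof (induct n)
  case (Suc n)
  then show ?case using Phi_submodule[OF Suc(3) sub_carrier[OF Suc(1)]] by simp
qed simp

lemma adic_Suc_sub: "submodule N R M \<Longrightarrow> I \<subseteq> carrier R \<Longrightarrow> adic_pow R M I N (Suc n) \<subseteq> adic_pow R M I N n"
  using Phi_sub[OF adic_submodule[of N I n]] by simp

lemma adic_dec: "submodule N R M \<Longrightarrow> I \<subseteq> carrier R \<Longrightarrow> n \<le> m \<Longrightarrow> adic_pow R M I N m \<subseteq> adic_pow R M I N n"
proof -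
  assume a: "submodule N R M" "I \<subseteq> carrier R" "n \<le> m"
  have "\<And>k. adic_pow R M I N (Suc k) \<subseteq> adic_pow R M I N k" using adic_Suc_sub[OF a(1,2)] by blast
  then show ?thesis by (rule lift_Suc_antimono_le[of "adic_pow R M I N"]) (rule a(3))
qed

lemma adic_sub: "submodule N R M \<Longrightarrow> I \<subseteq> carrier R \<Longrightarrow> adic_pow R M I N n \<subseteq> N"
  using adic_dec[of N I 0 n] by simp

lemma adic_mono: "submodule N' R M \<Longrightarrow> I \<subseteq> carrier R \<Longrightarrow> N \<subseteq> N' \<Longrightarrow> adic_pow R M I N n \<subseteq> adic_pow R M I N' n"
proof (induct n)
  case (Suc n)
  then show ?case using Phi_mono[OF _ sub_carrier[OF adic_submodule]] by (simp add: subset_trans)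
qed simp

lemma adic_mono_ideal: "submodule N R M \<Longrightarrow> I \<subseteq> carrier R \<Longrightarrow> J \<subseteq> I \<Longrightarrow> adic_pow R M J N n \<subseteq> adic_pow R M I N n"
proof (induct n)
  case (Suc n)
  have "Phi J (adic_pow R M J N n) \<subseteq> Phi I (adic_pow R M I N n)"
    apply (rule Phi_le[OF Phi_submodule])
    using Suc sub_carrier[OF adic_submodule[OF Suc(2,3)]] by (auto intro!: Phi_gen)
  then show ?case by simp
qed simp

lemma msumI: "a \<in> A \<Longrightarrow> b \<in> B \<Longrightarrow> a \<oplus>\<^bsub>M\<^esub> b \<in> msum M A B"
  unfolding msum_def by blast

lemma msumE: "x \<in> msum M A B \<Longrightarrow> (\<And>a b. a \<in> A \<Longrightarrow> b \<in> B \<Longrightarrow> x = a \<oplus>\<^bsub>M\<^esub> b \<Longrightarrow> P) \<Longrightarrow> P"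
  unfolding msum_def by blast

lemma msum_submodule:
  assumes A: "submodule A R M" and B: "submodule B R M"
  shows "submodule (msum M A B) R M"
proof (rule submoduleI)
  note cA = sub_carrier[OF A] and cB = sub_carrier[OF B]
  show "msum M A B \<subseteq> carrier M"
  proof
    fix x assume xin: "x \<in> msum M A B"
    obtain a b where ab: "a \<in> A" "b \<in> B" "x = a \<oplus>\<^bsub>M\<^esub> b" using msumE[OF xin] by blast
    have "a \<in> carrier M" "b \<in> carrier M" using ab(1,2) cA cB by (blast, blast)
    then show "x \<in> carrier M" using ab(3) by simp
  qed
  have "\<zero>\<^bsub>M\<^esub> \<oplus>\<^bsub>M\<^esub> \<zero>\<^bsub>M\<^esub> \<in> msum M A B" by (rule msumI[OF sub_zero[OF A] sub_zero[OF B]])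
  then show "\<zero>\<^bsub>M\<^esub> \<in> msum M A B" by simp
  show "\<ominus>\<^bsub>M\<^esub> x \<in> msum M A B" if xin: "x \<in> msum M A B" for x
  proof -
    obtain a b where ab: "a \<in> A" "b \<in> B" "x = a \<oplus>\<^bsub>M\<^esub> b" using msumE[OF xin] by blast
    have c: "a \<in> carrier M" "b \<in> carrier M" using ab(1,2) cA cB by (blast, blast)
    have "\<ominus>\<^bsub>M\<^esub> x = \<ominus>\<^bsub>M\<^esub> a \<oplus>\<^bsub>M\<^esub> \<ominus>\<^bsub>M\<^esub> b" unfolding ab(3) by (rule M.minus_add[OF c])
    moreover have "\<ominus>\<^bsub>M\<^esub> a \<oplus>\<^bsub>M\<^esub> \<ominus>\<^bsub>M\<^esub> b \<in> msum M A B"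
      by (rule msumI[OF submoduleE(3)[OF A ab(1)] submoduleE(3)[OF B ab(2)]])
    ultimately show ?thesis by simp
  qed
  show "x \<oplus>\<^bsub>M\<^esub> y \<in> msum M A B" if xy: "x \<in> msum M A B" "y \<in> msum M A B" for x y
  proof -
    obtain a b where ab: "a \<in> A" "b \<in> B" "x = a \<oplus>\<^bsub>M\<^esub> b" using msumE[OF xy(1)] by blast
    obtain a' b' where ab': "a' \<in> A" "b' \<in> B" "y = a' \<oplus>\<^bsub>M\<^esub> b'" using msumE[OF xy(2)] by blast
    have c: "a \<in> carrier M" "b \<in> carrier M" "a' \<in> carrier M" "b' \<in> carrier M"
      using ab(1,2) ab'(1,2) cA cB by (blast, blast, blast, blast)
    have "x \<oplus>\<^bsub>M\<^esub> y = (a \<oplus>\<^bsub>M\<^esub> a') \<oplus>\<^bsub>M\<^esub> (b \<oplus>\<^bsub>M\<^esub> b')"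
      unfolding ab(3) ab'(3) using c by (simp add: M.a_ac)
    moreover have "(a \<oplus>\<^bsub>M\<^esub> a') \<oplus>\<^bsub>M\<^esub> (b \<oplus>\<^bsub>M\<^esub> b') \<in> msum M A B"
      by (rule msumI[OF submoduleE(5)[OF A ab(1) ab'(1)] submoduleE(5)[OF B ab(2) ab'(2)]])
    ultimately show ?thesis by simp
  qed
  show "r \<odot>\<^bsub>M\<^esub> x \<in> msum M A B" if rx: "r \<in> carrier R" "x \<in> msum M A B" for r x
  proof -
    obtain a b where ab: "a \<in> A" "b \<in> B" "x = a \<oplus>\<^bsub>M\<^esub> b" using msumE[OF rx(2)] by blast
    have c: "a \<in> carrier M" "b \<in> carrier M" using ab(1,2) cA cB by (blast, blast)
    have "r \<odot>\<^bsub>M\<^esub> x = r \<odot>\<^bsub>M\<^esub> a \<oplus>\<^bsub>M\<^esub> r \<odot>\<^bsub>M\<^esub> b"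
      unfolding ab(3) by (rule smult_r_distr[OF rx(1) c])
    moreover have "r \<odot>\<^bsub>M\<^esub> a \<oplus>\<^bsub>M\<^esub> r \<odot>\<^bsub>M\<^esub> b \<in> msum M A B"
      by (rule msumI[OF submoduleE(4)[OF A rx(1) ab(1)] submoduleE(4)[OF B rx(1) ab(2)]])
    ultimately show ?thesis by simp
  qed
qed

lemma msum_upper1: "submodule B R M \<Longrightarrow> A \<subseteq> carrier M \<Longrightarrow> A \<subseteq> msum M A B"
proof
  fix x assume a: "submodule B R M" "A \<subseteq> carrier M" "x \<in> A"
  then have "x \<oplus>\<^bsub>M\<^esub> \<zero>\<^bsub>M\<^esub> \<in> msum M A B" using msumI sub_zero by blast
  moreover have "x \<in> carrier M" using a by blast
  ultimately show "x \<in> msum M A B" by simp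
qed

lemma msum_upper2: "submodule A R M \<Longrightarrow> B \<subseteq> carrier M \<Longrightarrow> B \<subseteq> msum M A B"
proof
  fix x assume a: "submodule A R M" "B \<subseteq> carrier M" "x \<in> B"
  then have "\<zero>\<^bsub>M\<^esub> \<oplus>\<^bsub>M\<^esub> x \<in> msum M A B" using msumI sub_zero by blast
  moreover have "x \<in> carrier M" using a by blast
  ultimately show "x \<in> msum M A B" by simp
qed

lemma msum_least: "submodule H R M \<Longrightarrow> A \<subseteq> H \<Longrightarrow> B \<subseteq> H \<Longrightarrow> msum M A B \<subseteq> H"
proof
  fix x assume a: "submodule H R M" "A \<subseteq> H" "B \<subseteq> H" "x \<in> msum M A B"
  then obtain p q where "p \<in> A" "q \<in> B" "x = p \<oplus>\<^bsub>M\<^esub> q" by (blast elim: msumE)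
  then show "x \<in> H" using a submoduleE(5)[OF a(1)] by blast
qed

lemma Phi_msum:
  assumes I: "I \<subseteq> carrier R" and A: "submodule A R M" and B: "submodule B R M"
  shows "Phi I (msum M A B) = msum M (Phi I A) (Phi I B)"
proof
  note cA = sub_carrier[OF A] and cB = sub_carrier[OF B]
  show "Phi I (msum M A B) \<subseteq> msum M (Phi I A) (Phi I B)"
  proof (rule Phi_le)
    show "submodule (msum M (Phi I A) (Phi I B)) R M"
      by (rule msum_submodule[OF Phi_submodule[OF I cA] Phi_submodule[OF I cB]])
    fix r x assume r: "r \<in> I" and x: "x \<in> msum M A B"
    obtain a b where ab: "a \<in> A" "b \<in> B" "x = a \<oplus>\<^bsub>M\<^esub> b" using msumE[OF x] by blast
    have c: "a \<in> carrier M" "b \<in> carrier M" using ab(1,2) cA cB by (blast, blast)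
    have rc: "r \<in> carrier R" using r I by blast
    have "r \<odot>\<^bsub>M\<^esub> x = r \<odot>\<^bsub>M\<^esub> a \<oplus>\<^bsub>M\<^esub> r \<odot>\<^bsub>M\<^esub> b"
      unfolding ab(3) by (rule smult_r_distr[OF rc c])
    moreover have "r \<odot>\<^bsub>M\<^esub> a \<oplus>\<^bsub>M\<^esub> r \<odot>\<^bsub>M\<^esub> b \<in> msum M (Phi I A) (Phi I B)"
      by (rule msumI[OF Phi_gen[OF r ab(1)] Phi_gen[OF r ab(2)]])
    ultimately show "r \<odot>\<^bsub>M\<^esub> x \<in> msum M (Phi I A) (Phi I B)" by simp
  qed
  have S: "submodule (msum M A B) R M" by (rule msum_submodule[OF A B])
  have S1: "Phi I A \<subseteq> Phi I (msum M A B)"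
    by (rule Phi_mono[OF I sub_carrier[OF S] msum_upper1[OF B cA]])
  have S2: "Phi I B \<subseteq> Phi I (msum M A B)"
    by (rule Phi_mono[OF I sub_carrier[OF S] msum_upper2[OF A cB]])
  show "msum M (Phi I A) (Phi I B) \<subseteq> Phi I (msum M A B)"
    by (rule msum_least[OF Phi_submodule[OF I sub_carrier[OF S]] S1 S2])
qed

lemma adic_msum:
  assumes I: "I \<subseteq> carrier R" and A: "submodule A R M" and B: "submodule B R M"
  shows "adic_pow R M I (msum M A B) n = msum M (adic_pow R M I A n) (adic_pow R M I B n)"
proof (induct n)
  case (Suc n)
  then show ?case using Phi_msum[OF I adic_submodule[OF A I] adic_submodule[OF B I]] by simp
qed simp

end


context module begin

lemma zero_submodule: "submodule {\<zero>\<^bsub>M\<^esub>} R M"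
  by (rule submoduleI) auto

lemma adic_zero: "I \<subseteq> carrier R \<Longrightarrow> adic_pow R M I {\<zero>\<^bsub>M\<^esub>} n = {\<zero>\<^bsub>M\<^esub>}"
proof (induct n)
  case (Suc n)
  have "Phi I {\<zero>\<^bsub>M\<^esub>} \<subseteq> {\<zero>\<^bsub>M\<^esub>}" by (rule Phi_sub[OF zero_submodule Suc(2)])
  moreover have "\<zero>\<^bsub>M\<^esub> \<in> Phi I {\<zero>\<^bsub>M\<^esub>}" by (rule sub_zero[OF Phi_submodule[OF Suc(2)]]) simp
  ultimately show ?case using Suc by auto
qed simp

lemma zero_complete: "I \<subseteq> carrier R \<Longrightarrow> adically_complete R M I {\<zero>\<^bsub>M\<^esub>}"
proof -
  assume I: "I \<subseteq> carrier R"
  have z: "\<zero>\<^bsub>M\<^esub> \<ominus>\<^bsub>M\<^esub> \<zero>\<^bsub>M\<^esub> = \<zero>\<^bsub>M\<^esub>" by (simp add: a_minus_def)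
  show ?thesis unfolding adically_complete_def adic_zero[OF I] using z by auto
qed

lemma minus_plus_swap: "y1 \<in> carrier M \<Longrightarrow> y2 \<in> carrier M \<Longrightarrow> p \<in> carrier M \<Longrightarrow> q \<in> carrier M \<Longrightarrow>
  (y1 \<oplus>\<^bsub>M\<^esub> y2) \<ominus>\<^bsub>M\<^esub> (p \<oplus>\<^bsub>M\<^esub> q) = (y1 \<ominus>\<^bsub>M\<^esub> p) \<oplus>\<^bsub>M\<^esub> (y2 \<ominus>\<^bsub>M\<^esub> q)"
  by (simp add: a_minus_def M.minus_add M.a_ac)

lemma add_minus_cancel: "x \<in> carrier M \<Longrightarrow> y \<in> carrier M \<Longrightarrow> x \<oplus>\<^bsub>M\<^esub> (y \<ominus>\<^bsub>M\<^esub> x) = y"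
  unfolding a_minus_def by (metis M.a_lcomm M.add.inv_closed M.r_neg M.r_zero)

lemma plus_minus_cancel: "x \<in> carrier M \<Longrightarrow> y \<in> carrier M \<Longrightarrow> (x \<oplus>\<^bsub>M\<^esub> y) \<ominus>\<^bsub>M\<^esub> x = y"
  unfolding a_minus_def by (metis M.a_comm M.a_assoc M.add.inv_closed M.r_neg M.r_zero)

lemma complete_msum:
  assumes I: "I \<subseteq> carrier R" and A: "submodule A R M" and B: "submodule B R M"
    and cA: "adically_complete R M I A" and cB: "adically_complete R M I B"
    and sep: "(\<Inter>n. adic_pow R M I (carrier M) n) = {\<zero>\<^bsub>M\<^esub>}"
  shows "adically_complete R M I (msum M A B)"
proof -
  let ?P = "msum M A B"
  have cA2: "\<exists>y\<in>A. \<forall>n. y \<ominus>\<^bsub>M\<^esub> z n \<in> adic_pow R M I A n"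
    if "\<forall>n. z n \<in> A" "\<forall>n. z (Suc n) \<ominus>\<^bsub>M\<^esub> z n \<in> adic_pow R M I A n" for z
  proof -
    have h: "\<forall>x. (\<forall>n. x n \<in> A) \<and> (\<forall>n. x (Suc n) \<ominus>\<^bsub>M\<^esub> x n \<in> adic_pow R M I A n) \<longrightarrow>
        (\<exists>y\<in>A. \<forall>n. y \<ominus>\<^bsub>M\<^esub> x n \<in> adic_pow R M I A n)"
      using cA unfolding adically_complete_def by (rule conjunct2)
    show ?thesis using spec[OF h, of z] that by blast
  qed
  have cB2: "\<exists>y\<in>B. \<forall>n. y \<ominus>\<^bsub>M\<^esub> z n \<in> adic_pow R M I B n"
    if "\<forall>n. z n \<in> B" "\<forall>n. z (Suc n) \<ominus>\<^bsub>M\<^esub> z n \<in> adic_pow R M I B n" for z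
  proof -
    have h: "\<forall>x. (\<forall>n. x n \<in> B) \<and> (\<forall>n. x (Suc n) \<ominus>\<^bsub>M\<^esub> x n \<in> adic_pow R M I B n) \<longrightarrow>
        (\<exists>y\<in>B. \<forall>n. y \<ominus>\<^bsub>M\<^esub> x n \<in> adic_pow R M I B n)"
      using cB unfolding adically_complete_def by (rule conjunct2)
    show ?thesis using spec[OF h, of z] that by blast
  qed
  have P: "submodule ?P R M" by (rule msum_submodule[OF A B])
  note Pc = sub_carrier[OF P] and Ac = sub_carrier[OF A] and Bc = sub_carrier[OF B]
  have 1: "(\<Inter>n. adic_pow R M I ?P n) = {\<zero>\<^bsub>M\<^esub>}"
  proof
    have "adic_pow R M I ?P n \<subseteq> adic_pow R M I (carrier M) n" for n
      by (rule adic_mono[OF carrier_is_submodule I Pc])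
    note sub = this
    show "(\<Inter>n. adic_pow R M I ?P n) \<subseteq> {\<zero>\<^bsub>M\<^esub>}"
    proof
      fix z assume "z \<in> (\<Inter>n. adic_pow R M I ?P n)"
      then have "z \<in> adic_pow R M I ?P n" for n by simp
      then have "z \<in> adic_pow R M I (carrier M) n" for n by (rule subsetD[OF sub])
      then have "z \<in> (\<Inter>n. adic_pow R M I (carrier M) n)" by simp
      then show "z \<in> {\<zero>\<^bsub>M\<^esub>}" unfolding sep .
    qed
    have "\<zero>\<^bsub>M\<^esub> \<in> adic_pow R M I ?P n" for n by (rule sub_zero[OF adic_submodule[OF P I]])
    then show "{\<zero>\<^bsub>M\<^esub>} \<subseteq> (\<Inter>n. adic_pow R M I ?P n)" by simp
  qed
  have 2: "\<exists>y\<in>?P. \<forall>n. y \<ominus>\<^bsub>M\<^esub> x n \<in> adic_pow R M I ?P n"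
    if x: "\<forall>n. x n \<in> ?P" and d: "\<forall>n. x (Suc n) \<ominus>\<^bsub>M\<^esub> x n \<in> adic_pow R M I ?P n" for x
  proof -
    have ex: "\<forall>n. \<exists>ab. fst ab \<in> adic_pow R M I A n \<and> snd ab \<in> adic_pow R M I B n \<and> x (Suc n) \<ominus>\<^bsub>M\<^esub> x n = fst ab \<oplus>\<^bsub>M\<^esub> snd ab"
    proof
      fix n
      have "x (Suc n) \<ominus>\<^bsub>M\<^esub> x n \<in> msum M (adic_pow R M I A n) (adic_pow R M I B n)"
        using d adic_msum[OF I A B] by simp
      then obtain a b where "a \<in> adic_pow R M I A n" "b \<in> adic_pow R M I B n" "x (Suc n) \<ominus>\<^bsub>M\<^esub> x n = a \<oplus>\<^bsub>M\<^esub> b"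
        by (rule msumE)
      then show "\<exists>ab. fst ab \<in> adic_pow R M I A n \<and> snd ab \<in> adic_pow R M I B n \<and> x (Suc n) \<ominus>\<^bsub>M\<^esub> x n = fst ab \<oplus>\<^bsub>M\<^esub> snd ab"
        by (intro exI[of _ "(a, b)"]) simp
    qed
    obtain f where f: "\<forall>n. fst (f n) \<in> adic_pow R M I A n \<and> snd (f n) \<in> adic_pow R M I B n \<and> x (Suc n) \<ominus>\<^bsub>M\<^esub> x n = fst (f n) \<oplus>\<^bsub>M\<^esub> snd (f n)"
      using choice[OF ex] by (rule exE)
    define a where "a n = fst (f n)" for n
    define b where "b n = snd (f n)" for n
    have ab: "\<And>n. a n \<in> adic_pow R M I A n" "\<And>n. b n \<in> adic_pow R M I B n"
      "\<And>n. x (Suc n) \<ominus>\<^bsub>M\<^esub> x n = a n \<oplus>\<^bsub>M\<^esub> b n" using f unfolding a_def b_def by simp_all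
    have aA: "a n \<in> A" for n by (rule subsetD[OF adic_sub[OF A I] ab(1)])
    have bB: "b n \<in> B" for n by (rule subsetD[OF adic_sub[OF B I] ab(2)])
    have "x 0 \<in> ?P" using x by simp
    then obtain u v where uv: "u \<in> A" "v \<in> B" "x 0 = u \<oplus>\<^bsub>M\<^esub> v" by (rule msumE)
    define p where "p = rec_nat u (\<lambda>n pn. pn \<oplus>\<^bsub>M\<^esub> a n)"
    define q where "q = rec_nat v (\<lambda>n pn. pn \<oplus>\<^bsub>M\<^esub> b n)"
    have p0: "p 0 = u" and pS: "p (Suc n) = p n \<oplus>\<^bsub>M\<^esub> a n" for n unfolding p_def by simp_all
    have q0: "q 0 = v" and qS: "q (Suc n) = q n \<oplus>\<^bsub>M\<^esub> b n" for n unfolding q_def by simp_all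
    have pA: "p n \<in> A" for n
    proof (induct n)
      case 0 then show ?case using p0 uv by simp
    next
      case (Suc n) then show ?case unfolding pS by (rule submoduleE(5)[OF A _ aA])
    qed
    have qB: "q n \<in> B" for n
    proof (induct n)
      case 0 then show ?case using q0 uv by simp
    next
      case (Suc n) then show ?case unfolding qS by (rule submoduleE(5)[OF B _ bB])
    qed
    have pc: "p n \<in> carrier M" for n by (rule subsetD[OF Ac pA])
    have qc: "q n \<in> carrier M" for n by (rule subsetD[OF Bc qB])
    have ac: "a n \<in> carrier M" for n by (rule subsetD[OF Ac aA])
    have bc: "b n \<in> carrier M" for n by (rule subsetD[OF Bc bB])
    have xc: "x n \<in> carrier M" for n by (rule subsetD[OF Pc spec[OF x]])
    have xpq: "x n = p n \<oplus>\<^bsub>M\<^esub> q n" for n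
    proof (induct n)
      case 0 then show ?case using p0 q0 uv by simp
    next
      case (Suc n)
      have "x (Suc n) = x n \<oplus>\<^bsub>M\<^esub> (x (Suc n) \<ominus>\<^bsub>M\<^esub> x n)" using add_minus_cancel[OF xc xc] by simp
      also have "\<dots> = (p n \<oplus>\<^bsub>M\<^esub> q n) \<oplus>\<^bsub>M\<^esub> (a n \<oplus>\<^bsub>M\<^esub> b n)" unfolding ab(3) by (simp only: Suc)
      also have "\<dots> = p (Suc n) \<oplus>\<^bsub>M\<^esub> q (Suc n)" unfolding pS qS
        using pc qc ac bc by (simp add: M.a_ac)
      finally show ?case .
    qed
    have "p (Suc n) \<ominus>\<^bsub>M\<^esub> p n = a n" for n unfolding pS by (rule plus_minus_cancel[OF pc ac])
    then have "\<forall>n. p (Suc n) \<ominus>\<^bsub>M\<^esub> p n \<in> adic_pow R M I A n" using ab(1) by simp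
    moreover have "\<forall>n. p n \<in> A" using pA by simp
    ultimately have "\<exists>y\<in>A. \<forall>n. y \<ominus>\<^bsub>M\<^esub> p n \<in> adic_pow R M I A n" by (rule cA2[rotated])
    then obtain y1 where y1: "y1 \<in> A" "\<And>n. y1 \<ominus>\<^bsub>M\<^esub> p n \<in> adic_pow R M I A n" by (elim bexE) simp
    have "q (Suc n) \<ominus>\<^bsub>M\<^esub> q n = b n" for n unfolding qS by (rule plus_minus_cancel[OF qc bc])
    then have "\<forall>n. q (Suc n) \<ominus>\<^bsub>M\<^esub> q n \<in> adic_pow R M I B n" using ab(2) by simp
    moreover have "\<forall>n. q n \<in> B" using qB by simp
    ultimately have "\<exists>y\<in>B. \<forall>n. y \<ominus>\<^bsub>M\<^esub> q n \<in> adic_pow R M I B n" by (rule cB2[rotated])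
    then obtain y2 where y2: "y2 \<in> B" "\<And>n. y2 \<ominus>\<^bsub>M\<^esub> q n \<in> adic_pow R M I B n" by (elim bexE) simp
    have y1c: "y1 \<in> carrier M" by (rule subsetD[OF Ac y1(1)])
    have y2c: "y2 \<in> carrier M" by (rule subsetD[OF Bc y2(1)])
    have yP: "y1 \<oplus>\<^bsub>M\<^esub> y2 \<in> ?P" by (rule msumI[OF y1(1) y2(1)])
    have yd: "(y1 \<oplus>\<^bsub>M\<^esub> y2) \<ominus>\<^bsub>M\<^esub> x n \<in> adic_pow R M I ?P n" for n
    proof -
      have "(y1 \<oplus>\<^bsub>M\<^esub> y2) \<ominus>\<^bsub>M\<^esub> x n = (y1 \<ominus>\<^bsub>M\<^esub> p n) \<oplus>\<^bsub>M\<^esub> (y2 \<ominus>\<^bsub>M\<^esub> q n)"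
        unfolding xpq by (rule minus_plus_swap[OF y1c y2c pc qc])
      moreover have "(y1 \<ominus>\<^bsub>M\<^esub> p n) \<oplus>\<^bsub>M\<^esub> (y2 \<ominus>\<^bsub>M\<^esub> q n) \<in> msum M (adic_pow R M I A n) (adic_pow R M I B n)"
        by (rule msumI[OF y1(2) y2(2)])
      ultimately show ?thesis unfolding adic_msum[OF I A B] by simp
    qed
    show ?thesis
    proof (rule bexI[of _ "y1 \<oplus>\<^bsub>M\<^esub> y2"])
      show "\<forall>n. (y1 \<oplus>\<^bsub>M\<^esub> y2) \<ominus>\<^bsub>M\<^esub> x n \<in> adic_pow R M I ?P n" using yd by simp
    qed (rule yP)
  qed
  show ?thesis unfolding adically_complete_def
  proof (intro conjI allI impI)
    show "(\<Inter>n. adic_pow R M I ?P n) = {\<zero>\<^bsub>M\<^esub>}" by (rule 1)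
    fix x assume "(\<forall>n. x n \<in> ?P) \<and> (\<forall>n. x (Suc n) \<ominus>\<^bsub>M\<^esub> x n \<in> adic_pow R M I ?P n)"
    then show "\<exists>y\<in>?P. \<forall>n. y \<ominus>\<^bsub>M\<^esub> x n \<in> adic_pow R M I ?P n" using 2 by blast
  qed
qed

end



definition lin :: "('a, 'c) ring_scheme \<Rightarrow> ('a, 'b, 'd) module_scheme \<Rightarrow> 'b set \<Rightarrow> 'b \<Rightarrow> 'b set" where
  "lin R M S s = {t \<oplus>\<^bsub>M\<^esub> r \<odot>\<^bsub>M\<^esub> s | t r. t \<in> S \<and> r \<in> carrier R}"

definition coef :: "('a, 'c) ring_scheme \<Rightarrow> ('a, 'b, 'd) module_scheme \<Rightarrow> 'b set \<Rightarrow> 'b \<Rightarrow> 'b set \<Rightarrow> 'a set" where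
  "coef R M S s H = {r \<in> carrier R. \<exists>t\<in>S. t \<oplus>\<^bsub>M\<^esub> r \<odot>\<^bsub>M\<^esub> s \<in> H}"

context module begin

lemma linI: "t \<in> S \<Longrightarrow> r \<in> carrier R \<Longrightarrow> t \<oplus>\<^bsub>M\<^esub> r \<odot>\<^bsub>M\<^esub> s \<in> lin R M S s"
  unfolding lin_def by blast

lemma linE: "x \<in> lin R M S s \<Longrightarrow> (\<And>t r. t \<in> S \<Longrightarrow> r \<in> carrier R \<Longrightarrow> x = t \<oplus>\<^bsub>M\<^esub> r \<odot>\<^bsub>M\<^esub> s \<Longrightarrow> P) \<Longrightarrow> P"
  unfolding lin_def by blast

lemma mk_ideal:
  assumes c: "J \<subseteq> carrier R" and z: "\<zero>\<^bsub>R\<^esub> \<in> J" and n: "\<And>a. a \<in> J \<Longrightarrow> \<ominus>\<^bsub>R\<^esub> a \<in> J"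
    and p: "\<And>a b. a \<in> J \<Longrightarrow> b \<in> J \<Longrightarrow> a \<oplus>\<^bsub>R\<^esub> b \<in> J"
    and m: "\<And>a x. a \<in> J \<Longrightarrow> x \<in> carrier R \<Longrightarrow> x \<otimes>\<^bsub>R\<^esub> a \<in> J"
  shows "ideal J R"
proof (rule idealI[OF R.ring_axioms])
  show "subgroup J (add_monoid R)"
    apply (rule R.add.subgroupI)
    using c z n p by (auto simp: a_inv_def)
  show "\<And>a x. a \<in> J \<Longrightarrow> x \<in> carrier R \<Longrightarrow> x \<otimes>\<^bsub>R\<^esub> a \<in> J" by (rule m)
  fix a x assume a: "a \<in> J" and x: "x \<in> carrier R"
  have "a \<in> carrier R" using a c by (rule subsetD[rotated])
  then have "a \<otimes>\<^bsub>R\<^esub> x = x \<otimes>\<^bsub>R\<^esub> a" using x by (rule R.m_comm)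
  then show "a \<otimes>\<^bsub>R\<^esub> x \<in> J" using m[OF a x] by simp
qed

lemma lin_add: "t \<in> carrier M \<Longrightarrow> t' \<in> carrier M \<Longrightarrow> r \<in> carrier R \<Longrightarrow> r' \<in> carrier R \<Longrightarrow> s \<in> carrier M \<Longrightarrow>
  (t \<oplus>\<^bsub>M\<^esub> r \<odot>\<^bsub>M\<^esub> s) \<oplus>\<^bsub>M\<^esub> (t' \<oplus>\<^bsub>M\<^esub> r' \<odot>\<^bsub>M\<^esub> s) = (t \<oplus>\<^bsub>M\<^esub> t') \<oplus>\<^bsub>M\<^esub> (r \<oplus>\<^bsub>R\<^esub> r') \<odot>\<^bsub>M\<^esub> s"
  by (simp add: smult_l_distr M.a_ac)

lemma lin_neg: "t \<in> carrier M \<Longrightarrow> r \<in> carrier R \<Longrightarrow> s \<in> carrier M \<Longrightarrow>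
  \<ominus>\<^bsub>M\<^esub> (t \<oplus>\<^bsub>M\<^esub> r \<odot>\<^bsub>M\<^esub> s) = \<ominus>\<^bsub>M\<^esub> t \<oplus>\<^bsub>M\<^esub> (\<ominus>\<^bsub>R\<^esub> r) \<odot>\<^bsub>M\<^esub> s"
  by (simp add: smult_l_minus M.minus_add)

lemma lin_smult: "t \<in> carrier M \<Longrightarrow> r \<in> carrier R \<Longrightarrow> c \<in> carrier R \<Longrightarrow> s \<in> carrier M \<Longrightarrow>
  c \<odot>\<^bsub>M\<^esub> (t \<oplus>\<^bsub>M\<^esub> r \<odot>\<^bsub>M\<^esub> s) = c \<odot>\<^bsub>M\<^esub> t \<oplus>\<^bsub>M\<^esub> (c \<otimes>\<^bsub>R\<^esub> r) \<odot>\<^bsub>M\<^esub> s"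
  by (simp add: smult_r_distr smult_assoc1)

lemma lin_submodule:
  assumes S: "submodule S R M" and s: "s \<in> carrier M"
  shows "submodule (lin R M S s) R M"
proof (rule submoduleI)
  note Sc = sub_carrier[OF S]
  show "lin R M S s \<subseteq> carrier M"
  proof
    fix x assume "x \<in> lin R M S s"
    then obtain t r where tr: "t \<in> S" "r \<in> carrier R" "x = t \<oplus>\<^bsub>M\<^esub> r \<odot>\<^bsub>M\<^esub> s" by (rule linE)
    have "t \<in> carrier M" by (rule subsetD[OF Sc tr(1)])
    then show "x \<in> carrier M" using tr s by simp
  qed
  have "\<zero>\<^bsub>M\<^esub> \<oplus>\<^bsub>M\<^esub> \<zero>\<^bsub>R\<^esub> \<odot>\<^bsub>M\<^esub> s \<in> lin R M S s" by (rule linI[OF sub_zero[OF S] R.zero_closed])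
  then show "\<zero>\<^bsub>M\<^esub> \<in> lin R M S s" using s by simp
  show "\<ominus>\<^bsub>M\<^esub> x \<in> lin R M S s" if xin: "x \<in> lin R M S s" for x
  proof -
    obtain t r where tr: "t \<in> S" "r \<in> carrier R" "x = t \<oplus>\<^bsub>M\<^esub> r \<odot>\<^bsub>M\<^esub> s" using xin by (rule linE)
    have tc: "t \<in> carrier M" by (rule subsetD[OF Sc tr(1)])
    have "\<ominus>\<^bsub>M\<^esub> x = \<ominus>\<^bsub>M\<^esub> t \<oplus>\<^bsub>M\<^esub> (\<ominus>\<^bsub>R\<^esub> r) \<odot>\<^bsub>M\<^esub> s" unfolding tr(3) by (rule lin_neg[OF tc tr(2) s])
    moreover have "\<ominus>\<^bsub>M\<^esub> t \<oplus>\<^bsub>M\<^esub> (\<ominus>\<^bsub>R\<^esub> r) \<odot>\<^bsub>M\<^esub> s \<in> lin R M S s"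
      by (rule linI[OF submoduleE(3)[OF S tr(1)] R.a_inv_closed[OF tr(2)]])
    ultimately show ?thesis by simp
  qed
  show "x \<oplus>\<^bsub>M\<^esub> y \<in> lin R M S s" if xy: "x \<in> lin R M S s" "y \<in> lin R M S s" for x y
  proof -
    obtain t r where tr: "t \<in> S" "r \<in> carrier R" "x = t \<oplus>\<^bsub>M\<^esub> r \<odot>\<^bsub>M\<^esub> s" using xy(1) by (rule linE)
    obtain t' r' where tr': "t' \<in> S" "r' \<in> carrier R" "y = t' \<oplus>\<^bsub>M\<^esub> r' \<odot>\<^bsub>M\<^esub> s" using xy(2) by (rule linE)
    have tc: "t \<in> carrier M" by (rule subsetD[OF Sc tr(1)])
    have tc': "t' \<in> carrier M" by (rule subsetD[OF Sc tr'(1)])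
    have "x \<oplus>\<^bsub>M\<^esub> y = (t \<oplus>\<^bsub>M\<^esub> t') \<oplus>\<^bsub>M\<^esub> (r \<oplus>\<^bsub>R\<^esub> r') \<odot>\<^bsub>M\<^esub> s"
      unfolding tr(3) tr'(3) by (rule lin_add[OF tc tc' tr(2) tr'(2) s])
    moreover have "(t \<oplus>\<^bsub>M\<^esub> t') \<oplus>\<^bsub>M\<^esub> (r \<oplus>\<^bsub>R\<^esub> r') \<odot>\<^bsub>M\<^esub> s \<in> lin R M S s"
      by (rule linI[OF submoduleE(5)[OF S tr(1) tr'(1)] R.add.m_closed[OF tr(2) tr'(2)]])
    ultimately show ?thesis by simp
  qed
  show "c \<odot>\<^bsub>M\<^esub> x \<in> lin R M S s" if cx: "c \<in> carrier R" "x \<in> lin R M S s" for c x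
  proof -
    obtain t r where tr: "t \<in> S" "r \<in> carrier R" "x = t \<oplus>\<^bsub>M\<^esub> r \<odot>\<^bsub>M\<^esub> s" using cx(2) by (rule linE)
    have tc: "t \<in> carrier M" by (rule subsetD[OF Sc tr(1)])
    have "c \<odot>\<^bsub>M\<^esub> x = c \<odot>\<^bsub>M\<^esub> t \<oplus>\<^bsub>M\<^esub> (c \<otimes>\<^bsub>R\<^esub> r) \<odot>\<^bsub>M\<^esub> s"
      unfolding tr(3) by (rule lin_smult[OF tc tr(2) cx(1) s])
    moreover have "c \<odot>\<^bsub>M\<^esub> t \<oplus>\<^bsub>M\<^esub> (c \<otimes>\<^bsub>R\<^esub> r) \<odot>\<^bsub>M\<^esub> s \<in> lin R M S s"
      by (rule linI[OF submoduleE(4)[OF S cx(1) tr(1)] R.m_closed[OF cx(1) tr(2)]])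
    ultimately show ?thesis by simp
  qed
qed

lemma lin_upper: "submodule S R M \<Longrightarrow> s \<in> carrier M \<Longrightarrow> S \<subseteq> lin R M S s"
proof
  fix t assume S: "submodule S R M" and s: "s \<in> carrier M" and t: "t \<in> S"
  have "t \<oplus>\<^bsub>M\<^esub> \<zero>\<^bsub>R\<^esub> \<odot>\<^bsub>M\<^esub> s \<in> lin R M S s" by (rule linI[OF t R.zero_closed])
  moreover have "t \<in> carrier M" by (rule subsetD[OF sub_carrier[OF S] t])
  ultimately show "t \<in> lin R M S s" using s by simp
qed

lemma lin_gen: "submodule S R M \<Longrightarrow> s \<in> carrier M \<Longrightarrow> s \<in> lin R M S s"
proof -
  assume S: "submodule S R M" and s: "s \<in> carrier M"
  have "\<zero>\<^bsub>M\<^esub> \<oplus>\<^bsub>M\<^esub> \<one>\<^bsub>R\<^esub> \<odot>\<^bsub>M\<^esub> s \<in> lin R M S s" by (rule linI[OF sub_zero[OF S] R.one_closed])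
  then show ?thesis using s by simp
qed

lemma lin_least: "submodule H R M \<Longrightarrow> S \<subseteq> H \<Longrightarrow> s \<in> H \<Longrightarrow> lin R M S s \<subseteq> H"
proof
  fix x assume H: "submodule H R M" and SH: "S \<subseteq> H" and sH: "s \<in> H" and x: "x \<in> lin R M S s"
  obtain t r where tr: "t \<in> S" "r \<in> carrier R" "x = t \<oplus>\<^bsub>M\<^esub> r \<odot>\<^bsub>M\<^esub> s" using x by (rule linE)
  have "t \<oplus>\<^bsub>M\<^esub> r \<odot>\<^bsub>M\<^esub> s \<in> H"
    by (rule submoduleE(5)[OF H subsetD[OF SH tr(1)] submoduleE(4)[OF H tr(2) sH]])
  then show "x \<in> H" using tr(3) by simp
qed

lemma span_insert:
  assumes s: "s \<in> carrier M" and T: "T \<subseteq> carrier M"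
  shows "submod_span R M (insert s T) \<subseteq> lin R M (submod_span R M T) s"
proof (rule span_min[OF lin_submodule[OF span_submodule[OF T] s]])
  have S: "submodule (submod_span R M T) R M" by (rule span_submodule[OF T])
  have "s \<in> lin R M (submod_span R M T) s" by (rule lin_gen[OF S s])
  moreover have "T \<subseteq> lin R M (submod_span R M T) s"
    using span_sup[of T] lin_upper[OF S s] by (rule subset_trans)
  ultimately show "insert s T \<subseteq> lin R M (submod_span R M T) s" by simp
qed

lemma sub_inter: "submodule A R M \<Longrightarrow> submodule B R M \<Longrightarrow> submodule (A \<inter> B) R M"
proof (rule submoduleI)
  assume A: "submodule A R M" and B: "submodule B R M"
  show "A \<inter> B \<subseteq> carrier M" using sub_carrier[OF A] by blast
  show "\<zero>\<^bsub>M\<^esub> \<in> A \<inter> B" using sub_zero[OF A] sub_zero[OF B] by simp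
  show "\<ominus>\<^bsub>M\<^esub> a \<in> A \<inter> B" if "a \<in> A \<inter> B" for a
    using submoduleE(3)[OF A] submoduleE(3)[OF B] that by simp
  show "a \<oplus>\<^bsub>M\<^esub> b \<in> A \<inter> B" if "a \<in> A \<inter> B" "b \<in> A \<inter> B" for a b
    using submoduleE(5)[OF A] submoduleE(5)[OF B] that by simp
  show "c \<odot>\<^bsub>M\<^esub> a \<in> A \<inter> B" if "c \<in> carrier R" "a \<in> A \<inter> B" for c a
    using submoduleE(4)[OF A] submoduleE(4)[OF B] that by simp
qed


lemma coefI: "r \<in> carrier R \<Longrightarrow> t \<in> S \<Longrightarrow> t \<oplus>\<^bsub>M\<^esub> r \<odot>\<^bsub>M\<^esub> s \<in> H \<Longrightarrow> r \<in> coef R M S s H"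
  unfolding coef_def by blast

lemma coefE: "r \<in> coef R M S s H \<Longrightarrow> (\<And>t. r \<in> carrier R \<Longrightarrow> t \<in> S \<Longrightarrow> t \<oplus>\<^bsub>M\<^esub> r \<odot>\<^bsub>M\<^esub> s \<in> H \<Longrightarrow> P) \<Longrightarrow> P"
  unfolding coef_def by blast

lemma coef_mono: "H \<subseteq> H' \<Longrightarrow> coef R M S s H \<subseteq> coef R M S s H'"
  unfolding coef_def by blast

lemma coef_ideal:
  assumes S: "submodule S R M" and H: "submodule H R M" and s: "s \<in> carrier M"
  shows "ideal (coef R M S s H) R"
proof (rule mk_ideal)
  note Sc = sub_carrier[OF S]
  show "coef R M S s H \<subseteq> carrier R" unfolding coef_def by blast
  have "\<zero>\<^bsub>M\<^esub> \<oplus>\<^bsub>M\<^esub> \<zero>\<^bsub>R\<^esub> \<odot>\<^bsub>M\<^esub> s = \<zero>\<^bsub>M\<^esub>" using s by simp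
  then have "\<zero>\<^bsub>M\<^esub> \<oplus>\<^bsub>M\<^esub> \<zero>\<^bsub>R\<^esub> \<odot>\<^bsub>M\<^esub> s \<in> H" using sub_zero[OF H] by simp
  then show "\<zero>\<^bsub>R\<^esub> \<in> coef R M S s H" by (rule coefI[OF R.zero_closed sub_zero[OF S]])
  show "\<ominus>\<^bsub>R\<^esub> a \<in> coef R M S s H" if a: "a \<in> coef R M S s H" for a
  proof -
    obtain t where t: "a \<in> carrier R" "t \<in> S" "t \<oplus>\<^bsub>M\<^esub> a \<odot>\<^bsub>M\<^esub> s \<in> H" using a by (rule coefE)
    have tc: "t \<in> carrier M" by (rule subsetD[OF Sc t(2)])
    have "\<ominus>\<^bsub>M\<^esub> (t \<oplus>\<^bsub>M\<^esub> a \<odot>\<^bsub>M\<^esub> s) = \<ominus>\<^bsub>M\<^esub> t \<oplus>\<^bsub>M\<^esub> (\<ominus>\<^bsub>R\<^esub> a) \<odot>\<^bsub>M\<^esub> s" by (rule lin_neg[OF tc t(1) s])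
    moreover have "\<ominus>\<^bsub>M\<^esub> (t \<oplus>\<^bsub>M\<^esub> a \<odot>\<^bsub>M\<^esub> s) \<in> H" by (rule submoduleE(3)[OF H t(3)])
    ultimately have "\<ominus>\<^bsub>M\<^esub> t \<oplus>\<^bsub>M\<^esub> (\<ominus>\<^bsub>R\<^esub> a) \<odot>\<^bsub>M\<^esub> s \<in> H" by simp
    then show ?thesis by (rule coefI[OF R.a_inv_closed[OF t(1)] submoduleE(3)[OF S t(2)]])
  qed
  show "a \<oplus>\<^bsub>R\<^esub> b \<in> coef R M S s H" if ab: "a \<in> coef R M S s H" "b \<in> coef R M S s H" for a b
  proof -
    obtain t where t: "a \<in> carrier R" "t \<in> S" "t \<oplus>\<^bsub>M\<^esub> a \<odot>\<^bsub>M\<^esub> s \<in> H" using ab(1) by (rule coefE)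
    obtain t' where t': "b \<in> carrier R" "t' \<in> S" "t' \<oplus>\<^bsub>M\<^esub> b \<odot>\<^bsub>M\<^esub> s \<in> H" using ab(2) by (rule coefE)
    have tc: "t \<in> carrier M" by (rule subsetD[OF Sc t(2)])
    have tc': "t' \<in> carrier M" by (rule subsetD[OF Sc t'(2)])
    have "(t \<oplus>\<^bsub>M\<^esub> a \<odot>\<^bsub>M\<^esub> s) \<oplus>\<^bsub>M\<^esub> (t' \<oplus>\<^bsub>M\<^esub> b \<odot>\<^bsub>M\<^esub> s) = (t \<oplus>\<^bsub>M\<^esub> t') \<oplus>\<^bsub>M\<^esub> (a \<oplus>\<^bsub>R\<^esub> b) \<odot>\<^bsub>M\<^esub> s"
      by (rule lin_add[OF tc tc' t(1) t'(1) s])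
    moreover have "(t \<oplus>\<^bsub>M\<^esub> a \<odot>\<^bsub>M\<^esub> s) \<oplus>\<^bsub>M\<^esub> (t' \<oplus>\<^bsub>M\<^esub> b \<odot>\<^bsub>M\<^esub> s) \<in> H" by (rule submoduleE(5)[OF H t(3) t'(3)])
    ultimately have "(t \<oplus>\<^bsub>M\<^esub> t') \<oplus>\<^bsub>M\<^esub> (a \<oplus>\<^bsub>R\<^esub> b) \<odot>\<^bsub>M\<^esub> s \<in> H" by simp
    then show ?thesis by (rule coefI[OF R.add.m_closed[OF t(1) t'(1)] submoduleE(5)[OF S t(2) t'(2)]])
  qed
  show "x \<otimes>\<^bsub>R\<^esub> a \<in> coef R M S s H" if a: "a \<in> coef R M S s H" and x: "x \<in> carrier R" for a x
  proof -
    obtain t where t: "a \<in> carrier R" "t \<in> S" "t \<oplus>\<^bsub>M\<^esub> a \<odot>\<^bsub>M\<^esub> s \<in> H" using a by (rule coefE)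
    have tc: "t \<in> carrier M" by (rule subsetD[OF Sc t(2)])
    have "x \<odot>\<^bsub>M\<^esub> (t \<oplus>\<^bsub>M\<^esub> a \<odot>\<^bsub>M\<^esub> s) = x \<odot>\<^bsub>M\<^esub> t \<oplus>\<^bsub>M\<^esub> (x \<otimes>\<^bsub>R\<^esub> a) \<odot>\<^bsub>M\<^esub> s"
      by (rule lin_smult[OF tc t(1) x s])
    moreover have "x \<odot>\<^bsub>M\<^esub> (t \<oplus>\<^bsub>M\<^esub> a \<odot>\<^bsub>M\<^esub> s) \<in> H" by (rule submoduleE(4)[OF H x t(3)])
    ultimately have "x \<odot>\<^bsub>M\<^esub> t \<oplus>\<^bsub>M\<^esub> (x \<otimes>\<^bsub>R\<^esub> a) \<odot>\<^bsub>M\<^esub> s \<in> H" by simp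
    then show ?thesis by (rule coefI[OF R.m_closed[OF x t(1)] submoduleE(4)[OF S x t(2)]])
  qed
qed

lemma span_empty: "submod_span R M {} \<subseteq> {\<zero>\<^bsub>M\<^esub>}"
  by (rule span_min[OF zero_submodule]) simp

lemma CC:
  assumes noeth: "noetherian_ring R"
  shows "finite T \<Longrightarrow> T \<subseteq> carrier M \<Longrightarrow> C \<noteq> {} \<Longrightarrow>
    (\<forall>H\<in>C. submodule H R M \<and> H \<subseteq> submod_span R M T) \<Longrightarrow> (\<forall>H\<in>C. \<forall>H'\<in>C. H \<subseteq> H' \<or> H' \<subseteq> H) \<Longrightarrow> \<Union>C \<in> C"
proof (induct T arbitrary: C rule: finite_induct)
  case empty
  have HC: "H = {\<zero>\<^bsub>M\<^esub>}" if "H \<in> C" for H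
  proof -
    have "H \<subseteq> {\<zero>\<^bsub>M\<^esub>}" using empty(3) that span_empty by blast
    moreover have "\<zero>\<^bsub>M\<^esub> \<in> H" using empty(3) that sub_zero by blast
    ultimately show ?thesis by blast
  qed
  obtain H where H: "H \<in> C" using empty(2) by blast
  have "\<Union>C = H" using HC H by blast
  then show ?case using H by simp
next
  case (insert s T)
  have s: "s \<in> carrier M" and T: "T \<subseteq> carrier M" using insert(4) by auto
  have ch: "H \<subseteq> H' \<or> H' \<subseteq> H" if "H \<in> C" "H' \<in> C" for H H' using insert(7) that by blast
  let ?S = "submod_span R M T"
  have S: "submodule ?S R M" by (rule span_submodule[OF T])
  have Hs: "submodule H R M" if "H \<in> C" for H using insert(6) that by blast
  have Hsp: "H \<subseteq> submod_span R M (insert s T)" if "H \<in> C" for H using insert(6) that by blast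
  let ?C1 = "(\<lambda>H. H \<inter> ?S) ` C"
  have "\<Union>?C1 \<in> ?C1"
  proof (rule insert(3))
    show "T \<subseteq> carrier M" by (rule T)
    show "?C1 \<noteq> {}" using insert(5) by blast
    show "\<forall>H\<in>?C1. submodule H R M \<and> H \<subseteq> ?S"
    proof
      fix H assume "H \<in> ?C1"
      then obtain H' where H': "H' \<in> C" "H = H' \<inter> ?S" by blast
      then show "submodule H R M \<and> H \<subseteq> ?S" using sub_inter[OF Hs[OF H'(1)] S] by blast
    qed
    show "\<forall>H\<in>?C1. \<forall>H'\<in>?C1. H \<subseteq> H' \<or> H' \<subseteq> H"
    proof (intro ballI)
      fix H H' assume "H \<in> ?C1" "H' \<in> ?C1"
      then obtain G G' where G: "G \<in> C" "H = G \<inter> ?S" and G': "G' \<in> C" "H' = G' \<inter> ?S" by blast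
      show "H \<subseteq> H' \<or> H' \<subseteq> H" using ch[OF G(1) G'(1)] G(2) G'(2) by blast
    qed
  qed
  then obtain H0 where H0: "H0 \<in> C" "\<Union>?C1 = H0 \<inter> ?S" by blast
  have H0max: "H \<inter> ?S \<subseteq> H0" if "H \<in> C" for H
  proof -
    have "H \<inter> ?S \<subseteq> \<Union>?C1" using that by blast
    then show ?thesis using H0(2) by blast
  qed
  let ?C2 = "(\<lambda>H. coef R M ?S s H) ` C"
  have cid: "?C2 \<subseteq> {I. ideal I R}" using coef_ideal[OF S Hs s] by blast
  have cc: "\<forall>J\<in>?C2. \<forall>J'\<in>?C2. J \<subseteq> J' \<or> J' \<subseteq> J"
  proof (intro ballI)
    fix J J' assume "J \<in> ?C2" "J' \<in> ?C2"
    then obtain G G' where G: "G \<in> C" "J = coef R M ?S s G" and G': "G' \<in> C" "J' = coef R M ?S s G'" by blast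
    show "J \<subseteq> J' \<or> J' \<subseteq> J" using ch[OF G(1) G'(1)] coef_mono G(2) G'(2) by blast
  qed
  have chain2: "subset.chain {I. ideal I R} ?C2"
    unfolding subset.chain_def using cid cc by blast
  have ne2: "?C2 \<noteq> {}" using insert(5) by blast
  have "\<Union>?C2 \<in> ?C2" by (rule noetherian_ring.ideal_chain_is_trivial[OF noeth ne2 chain2])
  then obtain H1 where H1: "H1 \<in> C" "\<Union>?C2 = coef R M ?S s H1" by blast
  have H1max: "coef R M ?S s H \<subseteq> coef R M ?S s H1" if "H \<in> C" for H
  proof -
    have "coef R M ?S s H \<subseteq> \<Union>?C2" using that by blast
    then show ?thesis using H1(2) by simp
  qed
  define H2 where "H2 = (if H0 \<subseteq> H1 then H1 else H0)"
  have H2C: "H2 \<in> C" using H0(1) H1(1) unfolding H2_def by simp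
  have H02: "H0 \<subseteq> H2" unfolding H2_def by simp
  have H12: "H1 \<subseteq> H2" using ch[OF H0(1) H1(1)] unfolding H2_def by auto
  note Sc = sub_carrier[OF S]
  have "\<Union>C \<subseteq> H2"
  proof
    fix x assume "x \<in> \<Union>C"
    then obtain H where H: "H \<in> C" "x \<in> H" by blast
    show "x \<in> H2"
    proof (cases "H \<subseteq> H2")
      case True then show ?thesis using H(2) by blast
    next
      case False
      then have H2H: "H2 \<subseteq> H" using ch[OF H(1) H2C] by blast
      have "x \<in> submod_span R M (insert s T)" using Hsp[OF H(1)] H(2) by blast
      then have "x \<in> lin R M ?S s" using span_insert[OF s T] by blast
      then obtain t r where tr: "t \<in> ?S" "r \<in> carrier R" "x = t \<oplus>\<^bsub>M\<^esub> r \<odot>\<^bsub>M\<^esub> s" by (rule linE)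
      have "r \<in> coef R M ?S s H" using tr H(2) by (intro coefI[OF tr(2) tr(1)]) simp
      then have "r \<in> coef R M ?S s H2" using H1max[OF H(1)] coef_mono[OF H12] by blast
      then obtain t' where t': "t' \<in> ?S" "t' \<oplus>\<^bsub>M\<^esub> r \<odot>\<^bsub>M\<^esub> s \<in> H2" by (rule coefE)
      let ?y = "t' \<oplus>\<^bsub>M\<^esub> r \<odot>\<^bsub>M\<^esub> s"
      have tc: "t \<in> carrier M" by (rule subsetD[OF Sc tr(1)])
      have tc': "t' \<in> carrier M" by (rule subsetD[OF Sc t'(1)])
      have rs: "r \<odot>\<^bsub>M\<^esub> s \<in> carrier M" using tr(2) s by simp
      have yc: "?y \<in> carrier M" using tc' rs by simp
      have d: "x \<ominus>\<^bsub>M\<^esub> ?y = t \<ominus>\<^bsub>M\<^esub> t'"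
        unfolding tr(3) using tc tc' rs by (simp add: a_minus_def M.minus_add M.a_ac M.r_neg)
      have "t \<ominus>\<^bsub>M\<^esub> t' \<in> ?S" by (rule sub_minus[OF S tr(1) t'(1)])
      moreover have "x \<ominus>\<^bsub>M\<^esub> ?y \<in> H" by (rule sub_minus[OF Hs[OF H(1)] H(2) subsetD[OF H2H t'(2)]])
      ultimately have "x \<ominus>\<^bsub>M\<^esub> ?y \<in> H \<inter> ?S" using d by simp
      then have "x \<ominus>\<^bsub>M\<^esub> ?y \<in> H2" using H0max[OF H(1)] H02 by blast
      then have "?y \<oplus>\<^bsub>M\<^esub> (x \<ominus>\<^bsub>M\<^esub> ?y) \<in> H2" by (rule submoduleE(5)[OF Hs[OF H2C] t'(2)])
      moreover have "x \<in> carrier M" using sub_carrier[OF Hs[OF H(1)]] H(2) by blast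
      ultimately show ?thesis using add_minus_cancel[OF yc] by simp
    qed
  qed
  moreover have "H2 \<subseteq> \<Union>C" using H2C by blast
  ultimately have "\<Union>C = H2" by (rule antisym)
  then show ?case using H2C by simp
qed

lemma MC:
  assumes noeth: "noetherian_ring R" and fg: "finitely_generated_module R M"
    and F: "F \<noteq> {}" "\<And>H. H \<in> F \<Longrightarrow> submodule H R M"
  shows "\<exists>K\<in>F. \<forall>X\<in>F. K \<subseteq> X \<longrightarrow> X = K"
proof (rule Zorn_Lemma2, rule ballI)
  obtain T where T: "finite T" "T \<subseteq> carrier M" "submod_span R M T = carrier M"
    using fg unfolding finitely_generated_module_def by blast
  fix C assume C: "C \<in> chains F"
  then have CF: "C \<subseteq> F" and ch: "\<forall>H\<in>C. \<forall>H'\<in>C. H \<subseteq> H' \<or> H' \<subseteq> H"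
    unfolding chains_def chain_subset_def by auto
  show "\<exists>U\<in>F. \<forall>X\<in>C. X \<subseteq> U"
  proof (cases "C = {}")
    case True then show ?thesis using F(1) by blast
  next
    case False
    have "\<forall>H\<in>C. submodule H R M \<and> H \<subseteq> submod_span R M T"
      unfolding T(3) using CF F(2) sub_carrier by blast
    then have "\<Union>C \<in> C" by (rule CC[OF noeth T(1,2) False _ ch])
    then show ?thesis using CF by blast
  qed
qed

end



definition sc :: "('a, 'b, 'd) module_scheme \<Rightarrow> 'a \<Rightarrow> 'b set" where
  "sc M c = (\<lambda>x. c \<odot>\<^bsub>M\<^esub> x) ` carrier M"

context module begin

lemma sub_INT: "(\<And>n::nat. submodule (A n) R M) \<Longrightarrow> submodule (\<Inter>n. A n) R M"
proof (rule submoduleI)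
  assume A: "\<And>n::nat. submodule (A n) R M"
  show "(\<Inter>n. A n) \<subseteq> carrier M" using sub_carrier[OF A[of "0::nat"]] by blast
  show "\<zero>\<^bsub>M\<^esub> \<in> (\<Inter>n. A n)" using sub_zero[OF A] by simp
  show "\<ominus>\<^bsub>M\<^esub> a \<in> (\<Inter>n. A n)" if "a \<in> (\<Inter>n. A n)" for a
    using submoduleE(3)[OF A] that by simp
  show "a \<oplus>\<^bsub>M\<^esub> b \<in> (\<Inter>n. A n)" if "a \<in> (\<Inter>n. A n)" "b \<in> (\<Inter>n. A n)" for a b
    using submoduleE(5)[OF A] that by simp
  show "c \<odot>\<^bsub>M\<^esub> a \<in> (\<Inter>n. A n)" if "c \<in> carrier R" "a \<in> (\<Inter>n. A n)" for c a
    using submoduleE(4)[OF A] that by simp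
qed

lemma plus_minus_cancel2: "x \<in> carrier M \<Longrightarrow> y \<in> carrier M \<Longrightarrow> (x \<oplus>\<^bsub>M\<^esub> y) \<ominus>\<^bsub>M\<^esub> y = x"
  using plus_minus_cancel[of y x] by (simp add: M.a_comm)

lemma nakayama:
  assumes noeth: "noetherian_ring R" and fg: "finitely_generated_module R M"
    and I: "ideal I R" and jac: "I \<subseteq> jacobson_radical R"
    and N: "submodule N R M" and eq: "Phi I N = N"
  shows "N = {\<zero>\<^bsub>M\<^esub>}"
proof (rule ccontr)
  assume ne: "N \<noteq> {\<zero>\<^bsub>M\<^esub>}"
  note Nc = sub_carrier[OF N]
  let ?F = "{P. submodule P R M \<and> P \<subseteq> N \<and> P \<noteq> N}"
  have "{\<zero>\<^bsub>M\<^esub>} \<in> ?F" using zero_submodule sub_zero[OF N] ne by simp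
  then have Fne: "?F \<noteq> {}" by blast
  have Fs: "\<And>H. H \<in> ?F \<Longrightarrow> submodule H R M" by simp
  obtain P where P: "P \<in> ?F" and Pmax: "\<forall>X\<in>?F. P \<subseteq> X \<longrightarrow> X = P"
    using MC[OF noeth fg Fne Fs] by blast
  have Ps: "submodule P R M" and PN: "P \<subseteq> N" and PneN: "P \<noteq> N" using P by auto
  note Pc = sub_carrier[OF Ps]
  have fill: "lin R M P z = N" if z: "z \<in> N" "z \<notin> P" for z
  proof (rule ccontr)
    assume a: "lin R M P z \<noteq> N"
    have zc: "z \<in> carrier M" using z(1) Nc by blast
    have "lin R M P z \<in> ?F"
      using lin_submodule[OF Ps zc] lin_least[OF N PN z(1)] a by simp
    moreover have "P \<subseteq> lin R M P z" by (rule lin_upper[OF Ps zc])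
    ultimately have "lin R M P z = P" using Pmax by blast
    moreover have "z \<in> lin R M P z" by (rule lin_gen[OF Ps zc])
    ultimately show False using z(2) by simp
  qed
  obtain x where x: "x \<in> N" "x \<notin> P" using PN PneN by blast
  have xc: "x \<in> carrier M" using x(1) Nc by blast
  define m where "m = {r \<in> carrier R. r \<odot>\<^bsub>M\<^esub> x \<in> P}"
  have mI: "r \<in> m" if "r \<in> carrier R" "r \<odot>\<^bsub>M\<^esub> x \<in> P" for r using that unfolding m_def by simp
  have mD: "r \<in> carrier R" "r \<odot>\<^bsub>M\<^esub> x \<in> P" if "r \<in> m" for r using that unfolding m_def by simp_all
  have m_ideal: "ideal m R"
  proof (rule mk_ideal)
    show "m \<subseteq> carrier R" unfolding m_def by blast
    show "\<zero>\<^bsub>R\<^esub> \<in> m" using sub_zero[OF Ps] xc by (intro mI) simp_all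
    show "\<ominus>\<^bsub>R\<^esub> a \<in> m" if "a \<in> m" for a
    proof (rule mI)
      show "\<ominus>\<^bsub>R\<^esub> a \<in> carrier R" using mD(1)[OF that] by simp
      have "(\<ominus>\<^bsub>R\<^esub> a) \<odot>\<^bsub>M\<^esub> x = \<ominus>\<^bsub>M\<^esub> (a \<odot>\<^bsub>M\<^esub> x)" by (rule smult_l_minus[OF mD(1)[OF that] xc])
      then show "(\<ominus>\<^bsub>R\<^esub> a) \<odot>\<^bsub>M\<^esub> x \<in> P" using submoduleE(3)[OF Ps mD(2)[OF that]] by simp
    qed
    show "a \<oplus>\<^bsub>R\<^esub> b \<in> m" if "a \<in> m" "b \<in> m" for a b
    proof (rule mI)
      show "a \<oplus>\<^bsub>R\<^esub> b \<in> carrier R" using mD(1) that by simp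
      have "(a \<oplus>\<^bsub>R\<^esub> b) \<odot>\<^bsub>M\<^esub> x = a \<odot>\<^bsub>M\<^esub> x \<oplus>\<^bsub>M\<^esub> b \<odot>\<^bsub>M\<^esub> x"
        by (rule smult_l_distr[OF mD(1)[OF that(1)] mD(1)[OF that(2)] xc])
      then show "(a \<oplus>\<^bsub>R\<^esub> b) \<odot>\<^bsub>M\<^esub> x \<in> P" using submoduleE(5)[OF Ps mD(2)[OF that(1)] mD(2)[OF that(2)]] by simp
    qed
    show "y \<otimes>\<^bsub>R\<^esub> a \<in> m" if "a \<in> m" "y \<in> carrier R" for a y
    proof (rule mI)
      show "y \<otimes>\<^bsub>R\<^esub> a \<in> carrier R" using mD(1) that by simp
      have "(y \<otimes>\<^bsub>R\<^esub> a) \<odot>\<^bsub>M\<^esub> x = y \<odot>\<^bsub>M\<^esub> (a \<odot>\<^bsub>M\<^esub> x)" by (rule smult_assoc1[OF that(2) mD(1)[OF that(1)] xc])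
      then show "(y \<otimes>\<^bsub>R\<^esub> a) \<odot>\<^bsub>M\<^esub> x \<in> P" using submoduleE(4)[OF Ps that(2) mD(2)[OF that(1)]] by simp
    qed
  qed
  have m_max: "maximalideal m R"
  proof (rule maximalidealI[OF m_ideal])
    have "\<one>\<^bsub>R\<^esub> \<notin> m" using x(2) xc mD(2) by force
    then show "carrier R \<noteq> m" by blast
    fix J assume J: "ideal J R" "m \<subseteq> J" "J \<subseteq> carrier R"
    show "J = m \<or> J = carrier R"
    proof (cases "J = m")
      case True then show ?thesis by simp
    next
      case False
      then obtain r where r: "r \<in> J" "r \<notin> m" using J(2) by blast
      have rc: "r \<in> carrier R" using r(1) J(3) by blast
      have rxP: "r \<odot>\<^bsub>M\<^esub> x \<notin> P" using r(2) rc mI by blast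
      have rxN: "r \<odot>\<^bsub>M\<^esub> x \<in> N" by (rule submoduleE(4)[OF N rc x(1)])
      have "x \<in> lin R M P (r \<odot>\<^bsub>M\<^esub> x)" using fill[OF rxN rxP] x(1) by simp
      then obtain p c where pc: "p \<in> P" "c \<in> carrier R" "x = p \<oplus>\<^bsub>M\<^esub> c \<odot>\<^bsub>M\<^esub> (r \<odot>\<^bsub>M\<^esub> x)" by (rule linE)
      have cr: "c \<otimes>\<^bsub>R\<^esub> r \<in> carrier R" using pc(2) rc by simp
      have pcx: "p \<in> carrier M" using pc(1) Pc by blast
      have x2: "x = p \<oplus>\<^bsub>M\<^esub> (c \<otimes>\<^bsub>R\<^esub> r) \<odot>\<^bsub>M\<^esub> x" using pc(3) smult_assoc1[OF pc(2) rc xc] by simp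
      have "(\<one>\<^bsub>R\<^esub> \<ominus>\<^bsub>R\<^esub> c \<otimes>\<^bsub>R\<^esub> r) \<odot>\<^bsub>M\<^esub> x = x \<oplus>\<^bsub>M\<^esub> \<ominus>\<^bsub>M\<^esub> ((c \<otimes>\<^bsub>R\<^esub> r) \<odot>\<^bsub>M\<^esub> x)"
        using cr xc by (simp add: R.minus_eq smult_l_distr smult_l_minus)
      also have "\<dots> = p"
        using plus_minus_cancel2[OF pcx smult_closed[OF cr xc]] x2 by (simp add: a_minus_def)
      finally have "(\<one>\<^bsub>R\<^esub> \<ominus>\<^bsub>R\<^esub> c \<otimes>\<^bsub>R\<^esub> r) \<odot>\<^bsub>M\<^esub> x \<in> P" using pc(1) by simp
      then have "\<one>\<^bsub>R\<^esub> \<ominus>\<^bsub>R\<^esub> c \<otimes>\<^bsub>R\<^esub> r \<in> m" using cr by (intro mI) simp_all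
      then have j1: "\<one>\<^bsub>R\<^esub> \<ominus>\<^bsub>R\<^esub> c \<otimes>\<^bsub>R\<^esub> r \<in> J" using J(2) by blast
      have j2: "c \<otimes>\<^bsub>R\<^esub> r \<in> J" by (rule ideal.I_l_closed[OF J(1) r(1) pc(2)])
      have "(\<one>\<^bsub>R\<^esub> \<ominus>\<^bsub>R\<^esub> c \<otimes>\<^bsub>R\<^esub> r) \<oplus>\<^bsub>R\<^esub> c \<otimes>\<^bsub>R\<^esub> r \<in> J"
        by (rule additive_subgroup.a_closed[OF ideal.axioms(1)[OF J(1)] j1 j2])
      moreover have "(\<one>\<^bsub>R\<^esub> \<ominus>\<^bsub>R\<^esub> c \<otimes>\<^bsub>R\<^esub> r) \<oplus>\<^bsub>R\<^esub> c \<otimes>\<^bsub>R\<^esub> r = \<one>\<^bsub>R\<^esub>"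
        using cr by algebra
      ultimately have "\<one>\<^bsub>R\<^esub> \<in> J" by simp
      then show ?thesis using ideal.one_imp_carrier[OF J(1)] by blast
    qed
  qed
  have Im: "I \<subseteq> m" using jac m_max unfolding jacobson_radical_def by blast
  have Ic: "I \<subseteq> carrier R" using Im mD(1) by blast
  have "Phi I N \<subseteq> P"
  proof (rule Phi_le[OF Ps])
    fix r y assume r: "r \<in> I" and y: "y \<in> N"
    have rc: "r \<in> carrier R" using r Ic by blast
    have "y \<in> lin R M P x" using fill[OF x] y by simp
    then obtain p c where pc: "p \<in> P" "c \<in> carrier R" "y = p \<oplus>\<^bsub>M\<^esub> c \<odot>\<^bsub>M\<^esub> x" by (rule linE)
    have pcx: "p \<in> carrier M" using pc(1) Pc by blast
    have "r \<odot>\<^bsub>M\<^esub> y = r \<odot>\<^bsub>M\<^esub> p \<oplus>\<^bsub>M\<^esub> (r \<otimes>\<^bsub>R\<^esub> c) \<odot>\<^bsub>M\<^esub> x"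
      unfolding pc(3) by (rule lin_smult[OF pcx pc(2) rc xc])
    moreover have "r \<otimes>\<^bsub>R\<^esub> c \<in> I" by (rule ideal.I_r_closed[OF I r pc(2)])
    then have "(r \<otimes>\<^bsub>R\<^esub> c) \<odot>\<^bsub>M\<^esub> x \<in> P" using Im mD(2) by blast
    ultimately show "r \<odot>\<^bsub>M\<^esub> y \<in> P" using submoduleE(5)[OF Ps submoduleE(4)[OF Ps rc pc(1)]] by simp
  qed
  then have "N \<subseteq> P" using eq by simp
  then show False using x by blast
qed


lemma scI: "x \<in> carrier M \<Longrightarrow> c \<odot>\<^bsub>M\<^esub> x \<in> sc M c"
  unfolding sc_def by (rule imageI)

lemma scE: "u \<in> sc M c \<Longrightarrow> (\<And>x. x \<in> carrier M \<Longrightarrow> u = c \<odot>\<^bsub>M\<^esub> x \<Longrightarrow> P) \<Longrightarrow> P"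
  unfolding sc_def by blast

lemma smult_comm: "a \<in> carrier R \<Longrightarrow> r \<in> carrier R \<Longrightarrow> v \<in> carrier M \<Longrightarrow>
  a \<odot>\<^bsub>M\<^esub> (r \<odot>\<^bsub>M\<^esub> v) = r \<odot>\<^bsub>M\<^esub> (a \<odot>\<^bsub>M\<^esub> v)"
proof -
  assume a: "a \<in> carrier R" and r: "r \<in> carrier R" and v: "v \<in> carrier M"
  have "a \<odot>\<^bsub>M\<^esub> (r \<odot>\<^bsub>M\<^esub> v) = (a \<otimes>\<^bsub>R\<^esub> r) \<odot>\<^bsub>M\<^esub> v" by (rule smult_assoc1[OF a r v, symmetric])
  also have "\<dots> = (r \<otimes>\<^bsub>R\<^esub> a) \<odot>\<^bsub>M\<^esub> v" using R.m_comm[OF a r] by simp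
  also have "\<dots> = r \<odot>\<^bsub>M\<^esub> (a \<odot>\<^bsub>M\<^esub> v)" by (rule smult_assoc1[OF r a v])
  finally show ?thesis .
qed

lemma sc_submodule: "c \<in> carrier R \<Longrightarrow> submodule (sc M c) R M"
proof (rule submoduleI)
  assume c: "c \<in> carrier R"
  show "sc M c \<subseteq> carrier M" unfolding sc_def using c by auto
  have "c \<odot>\<^bsub>M\<^esub> \<zero>\<^bsub>M\<^esub> \<in> sc M c" by (rule scI) simp
  then show "\<zero>\<^bsub>M\<^esub> \<in> sc M c" using c by simp
  show "\<ominus>\<^bsub>M\<^esub> u \<in> sc M c" if u: "u \<in> sc M c" for u
  proof -
    obtain x where x: "x \<in> carrier M" "u = c \<odot>\<^bsub>M\<^esub> x" using u by (rule scE)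
    have "c \<odot>\<^bsub>M\<^esub> (\<ominus>\<^bsub>M\<^esub> x) \<in> sc M c" by (rule scI) (use x in simp)
    then show ?thesis using smult_r_minus[OF c x(1)] x(2) by simp
  qed
  show "u \<oplus>\<^bsub>M\<^esub> v \<in> sc M c" if uv: "u \<in> sc M c" "v \<in> sc M c" for u v
  proof -
    obtain x where x: "x \<in> carrier M" "u = c \<odot>\<^bsub>M\<^esub> x" using uv(1) by (rule scE)
    obtain y where y: "y \<in> carrier M" "v = c \<odot>\<^bsub>M\<^esub> y" using uv(2) by (rule scE)
    have "c \<odot>\<^bsub>M\<^esub> (x \<oplus>\<^bsub>M\<^esub> y) \<in> sc M c" by (rule scI) (use x y in simp)
    then show ?thesis using smult_r_distr[OF c x(1) y(1)] x(2) y(2) by simp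
  qed
  show "r \<odot>\<^bsub>M\<^esub> u \<in> sc M c" if ru: "r \<in> carrier R" "u \<in> sc M c" for r u
  proof -
    obtain x where x: "x \<in> carrier M" "u = c \<odot>\<^bsub>M\<^esub> x" using ru(2) by (rule scE)
    have "c \<odot>\<^bsub>M\<^esub> (r \<odot>\<^bsub>M\<^esub> x) \<in> sc M c" by (rule scI) (use x ru in simp)
    then show ?thesis using smult_comm[OF c ru(1) x(1)] x(2) by simp
  qed
qed

lemma colon_submodule:
  assumes W: "submodule W R M" and c: "c \<in> carrier R"
  shows "submodule {x \<in> carrier M. c \<odot>\<^bsub>M\<^esub> x \<in> W} R M"
proof (rule submoduleI)
  let ?H = "{x \<in> carrier M. c \<odot>\<^bsub>M\<^esub> x \<in> W}"
  show "?H \<subseteq> carrier M" by blast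
  have "c \<odot>\<^bsub>M\<^esub> \<zero>\<^bsub>M\<^esub> = \<zero>\<^bsub>M\<^esub>" using c by (rule smult_r_null)
  then show "\<zero>\<^bsub>M\<^esub> \<in> ?H" using sub_zero[OF W] by simp
next
  let ?H = "{x \<in> carrier M. c \<odot>\<^bsub>M\<^esub> x \<in> W}"
  fix b assume b: "b \<in> ?H"
  then have bc: "b \<in> carrier M" and bW: "c \<odot>\<^bsub>M\<^esub> b \<in> W" by auto
  have "c \<odot>\<^bsub>M\<^esub> (\<ominus>\<^bsub>M\<^esub> b) = \<ominus>\<^bsub>M\<^esub> (c \<odot>\<^bsub>M\<^esub> b)" by (rule smult_r_minus[OF c bc])
  moreover have "\<ominus>\<^bsub>M\<^esub> (c \<odot>\<^bsub>M\<^esub> b) \<in> W" by (rule submoduleE(3)[OF W bW])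
  ultimately show "\<ominus>\<^bsub>M\<^esub> b \<in> ?H" using bc by simp
next
  let ?H = "{x \<in> carrier M. c \<odot>\<^bsub>M\<^esub> x \<in> W}"
  fix b d assume b: "b \<in> ?H" and d: "d \<in> ?H"
  then have bc: "b \<in> carrier M" "d \<in> carrier M" and bW: "c \<odot>\<^bsub>M\<^esub> b \<in> W" "c \<odot>\<^bsub>M\<^esub> d \<in> W" by auto
  have "c \<odot>\<^bsub>M\<^esub> (b \<oplus>\<^bsub>M\<^esub> d) = c \<odot>\<^bsub>M\<^esub> b \<oplus>\<^bsub>M\<^esub> c \<odot>\<^bsub>M\<^esub> d" by (rule smult_r_distr[OF c bc])
  moreover have "c \<odot>\<^bsub>M\<^esub> b \<oplus>\<^bsub>M\<^esub> c \<odot>\<^bsub>M\<^esub> d \<in> W" by (rule submoduleE(5)[OF W bW])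
  ultimately show "b \<oplus>\<^bsub>M\<^esub> d \<in> ?H" using bc by simp
next
  let ?H = "{x \<in> carrier M. c \<odot>\<^bsub>M\<^esub> x \<in> W}"
  fix r y assume r: "r \<in> carrier R" and y: "y \<in> ?H"
  then have yc: "y \<in> carrier M" and yW: "c \<odot>\<^bsub>M\<^esub> y \<in> W" by auto
  have "c \<odot>\<^bsub>M\<^esub> (r \<odot>\<^bsub>M\<^esub> y) = r \<odot>\<^bsub>M\<^esub> (c \<odot>\<^bsub>M\<^esub> y)" by (rule smult_comm[OF c r yc])
  then have "c \<odot>\<^bsub>M\<^esub> (r \<odot>\<^bsub>M\<^esub> y) \<in> W" using submoduleE(4)[OF W r yW] by simp
  then show "r \<odot>\<^bsub>M\<^esub> y \<in> ?H" using r yc by simp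
qed

lemma pow_step: "a \<in> carrier R \<Longrightarrow> x \<in> carrier M \<Longrightarrow>
  a \<odot>\<^bsub>M\<^esub> ((a [^]\<^bsub>R\<^esub> (t::nat)) \<odot>\<^bsub>M\<^esub> x) = (a [^]\<^bsub>R\<^esub> Suc t) \<odot>\<^bsub>M\<^esub> x"
proof -
  assume a: "a \<in> carrier R" and x: "x \<in> carrier M"
  have at: "a [^]\<^bsub>R\<^esub> t \<in> carrier R" using a by simp
  have "a \<odot>\<^bsub>M\<^esub> ((a [^]\<^bsub>R\<^esub> t) \<odot>\<^bsub>M\<^esub> x) = (a \<otimes>\<^bsub>R\<^esub> a [^]\<^bsub>R\<^esub> t) \<odot>\<^bsub>M\<^esub> x"
    by (rule smult_assoc1[OF a at x, symmetric])
  also have "a \<otimes>\<^bsub>R\<^esub> a [^]\<^bsub>R\<^esub> t = a [^]\<^bsub>R\<^esub> Suc t" using R.m_comm[OF a at] by simp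
  finally show ?thesis .
qed

lemma adic_shift:
  assumes J: "J \<subseteq> carrier R" and a: "a \<in> carrier R"
  shows "u \<in> adic_pow R M J (sc M (a [^]\<^bsub>R\<^esub> (t::nat))) s \<Longrightarrow> a \<odot>\<^bsub>M\<^esub> u \<in> adic_pow R M J (sc M (a [^]\<^bsub>R\<^esub> Suc t)) s"
proof (induct s arbitrary: u)
  case 0
  then have "u \<in> sc M (a [^]\<^bsub>R\<^esub> t)" by simp
  then obtain x where x: "x \<in> carrier M" "u = (a [^]\<^bsub>R\<^esub> t) \<odot>\<^bsub>M\<^esub> x" by (rule scE)
  have "(a [^]\<^bsub>R\<^esub> Suc t) \<odot>\<^bsub>M\<^esub> x \<in> sc M (a [^]\<^bsub>R\<^esub> Suc t)" by (rule scI[OF x(1)])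
  then show ?case using pow_step[OF a x(1)] x(2) by simp
next
  case (Suc s)
  have at: "a [^]\<^bsub>R\<^esub> t \<in> carrier R" "a [^]\<^bsub>R\<^esub> Suc t \<in> carrier R" using a by simp_all
  let ?X = "adic_pow R M J (sc M (a [^]\<^bsub>R\<^esub> t)) s"
  let ?Y = "adic_pow R M J (sc M (a [^]\<^bsub>R\<^esub> Suc t)) s"
  have Xs: "submodule ?X R M" by (rule adic_submodule[OF sc_submodule[OF at(1)] J])
  have Ys: "submodule ?Y R M" by (rule adic_submodule[OF sc_submodule[OF at(2)] J])
  have W: "submodule (Phi J ?Y) R M" by (rule Phi_submodule[OF J sub_carrier[OF Ys]])
  have uspan: "u \<in> submod_span R M {r \<odot>\<^bsub>M\<^esub> v | r v. r \<in> J \<and> v \<in> ?X}"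
    using Suc(2) by (simp add: ideal_smult_submod_def)
  have hg: "a \<odot>\<^bsub>M\<^esub> g \<in> Phi J ?Y" if g: "g \<in> {r \<odot>\<^bsub>M\<^esub> v | r v. r \<in> J \<and> v \<in> ?X}" for g
  proof -
    obtain r v where rv: "r \<in> J" "v \<in> ?X" "g = r \<odot>\<^bsub>M\<^esub> v" using g by blast
    have rc: "r \<in> carrier R" using rv(1) J by blast
    have vc: "v \<in> carrier M" using rv(2) sub_carrier[OF Xs] by blast
    have "r \<odot>\<^bsub>M\<^esub> (a \<odot>\<^bsub>M\<^esub> v) \<in> Phi J ?Y" by (rule Phi_gen[OF rv(1) Suc(1)[OF rv(2)]])
    then show ?thesis using smult_comm[OF a rc vc] rv(3) by simp
  qed
  have "a \<odot>\<^bsub>M\<^esub> u \<in> Phi J ?Y"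
    by (rule scalar_span[OF W a gens_carrier[OF J sub_carrier[OF Xs]] hg uspan])
  then show ?case by simp
qed


lemma gen_ideal_step:
  assumes J: "ideal J R" and a: "a \<in> carrier R"
  shows "ideal {r \<in> carrier R. \<exists>c\<in>carrier R. r \<ominus>\<^bsub>R\<^esub> c \<otimes>\<^bsub>R\<^esub> a \<in> J} R"
proof (rule mk_ideal)
  let ?JA = "{r \<in> carrier R. \<exists>c\<in>carrier R. r \<ominus>\<^bsub>R\<^esub> c \<otimes>\<^bsub>R\<^esub> a \<in> J}"
  have JA_I: "r \<in> ?JA" if "r \<in> carrier R" "c \<in> carrier R" "r \<ominus>\<^bsub>R\<^esub> c \<otimes>\<^bsub>R\<^esub> a \<in> J" for r c
    using that by blast
  note Jsub = ideal.axioms(1)[OF J]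
  show "?JA \<subseteq> carrier R" by blast
  have "\<zero>\<^bsub>R\<^esub> \<ominus>\<^bsub>R\<^esub> \<zero>\<^bsub>R\<^esub> \<otimes>\<^bsub>R\<^esub> a = \<zero>\<^bsub>R\<^esub>" using a by algebra
  then show "\<zero>\<^bsub>R\<^esub> \<in> ?JA" using additive_subgroup.zero_closed[OF Jsub] by (intro JA_I[of _ "\<zero>\<^bsub>R\<^esub>"]) simp_all
  show "\<ominus>\<^bsub>R\<^esub> r \<in> ?JA" if r: "r \<in> ?JA" for r
  proof -
    obtain c where c: "r \<in> carrier R" "c \<in> carrier R" "r \<ominus>\<^bsub>R\<^esub> c \<otimes>\<^bsub>R\<^esub> a \<in> J" using r by blast
    have "\<ominus>\<^bsub>R\<^esub> r \<ominus>\<^bsub>R\<^esub> (\<ominus>\<^bsub>R\<^esub> c) \<otimes>\<^bsub>R\<^esub> a = \<ominus>\<^bsub>R\<^esub> (r \<ominus>\<^bsub>R\<^esub> c \<otimes>\<^bsub>R\<^esub> a)"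
      using c a by algebra
    then have "\<ominus>\<^bsub>R\<^esub> r \<ominus>\<^bsub>R\<^esub> (\<ominus>\<^bsub>R\<^esub> c) \<otimes>\<^bsub>R\<^esub> a \<in> J"
      using additive_subgroup.a_inv_closed[OF Jsub c(3)] by simp
    then show ?thesis using c by (intro JA_I[of _ "\<ominus>\<^bsub>R\<^esub> c"]) simp_all
  qed
  show "r \<oplus>\<^bsub>R\<^esub> r' \<in> ?JA" if rr: "r \<in> ?JA" "r' \<in> ?JA" for r r'
  proof -
    obtain c where c: "r \<in> carrier R" "c \<in> carrier R" "r \<ominus>\<^bsub>R\<^esub> c \<otimes>\<^bsub>R\<^esub> a \<in> J" using rr(1) by blast
    obtain c' where c': "r' \<in> carrier R" "c' \<in> carrier R" "r' \<ominus>\<^bsub>R\<^esub> c' \<otimes>\<^bsub>R\<^esub> a \<in> J" using rr(2) by blast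
    have "(r \<oplus>\<^bsub>R\<^esub> r') \<ominus>\<^bsub>R\<^esub> (c \<oplus>\<^bsub>R\<^esub> c') \<otimes>\<^bsub>R\<^esub> a = (r \<ominus>\<^bsub>R\<^esub> c \<otimes>\<^bsub>R\<^esub> a) \<oplus>\<^bsub>R\<^esub> (r' \<ominus>\<^bsub>R\<^esub> c' \<otimes>\<^bsub>R\<^esub> a)"
      using c c' a by algebra
    then have "(r \<oplus>\<^bsub>R\<^esub> r') \<ominus>\<^bsub>R\<^esub> (c \<oplus>\<^bsub>R\<^esub> c') \<otimes>\<^bsub>R\<^esub> a \<in> J"
      using additive_subgroup.a_closed[OF Jsub c(3) c'(3)] by simp
    then show ?thesis using c c' by (intro JA_I[of _ "c \<oplus>\<^bsub>R\<^esub> c'"]) simp_all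
  qed
  show "x \<otimes>\<^bsub>R\<^esub> r \<in> ?JA" if r: "r \<in> ?JA" and x: "x \<in> carrier R" for r x
  proof -
    obtain c where c: "r \<in> carrier R" "c \<in> carrier R" "r \<ominus>\<^bsub>R\<^esub> c \<otimes>\<^bsub>R\<^esub> a \<in> J" using r by blast
    have "x \<otimes>\<^bsub>R\<^esub> r \<ominus>\<^bsub>R\<^esub> (x \<otimes>\<^bsub>R\<^esub> c) \<otimes>\<^bsub>R\<^esub> a = x \<otimes>\<^bsub>R\<^esub> (r \<ominus>\<^bsub>R\<^esub> c \<otimes>\<^bsub>R\<^esub> a)"
      using c a x by algebra
    then have "x \<otimes>\<^bsub>R\<^esub> r \<ominus>\<^bsub>R\<^esub> (x \<otimes>\<^bsub>R\<^esub> c) \<otimes>\<^bsub>R\<^esub> a \<in> J"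
      using ideal.I_l_closed[OF J c(3) x] by simp
    then show ?thesis using c x by (intro JA_I[of _ "x \<otimes>\<^bsub>R\<^esub> c"]) simp_all
  qed
qed

lemma krull_K:
  assumes K: "submodule K R M" and I: "ideal I R"
    and apow: "\<And>a. a \<in> I \<Longrightarrow> \<exists>m::nat. \<forall>x\<in>carrier M. (a [^]\<^bsub>R\<^esub> m) \<odot>\<^bsub>M\<^esub> x \<in> K"
  shows "finite A \<Longrightarrow> A \<subseteq> I \<Longrightarrow> \<exists>n. adic_pow R M (genideal R A) (carrier M) n \<subseteq> K"
proof (induct A rule: finite_induct)
  case empty
  have Z: "genideal R {} \<subseteq> {\<zero>\<^bsub>R\<^esub>}" by (rule R.genideal_minimal[OF R.zeroideal]) simp
  have "Phi (genideal R {}) (carrier M) \<subseteq> K"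
  proof (rule Phi_le[OF K])
    fix r x assume "r \<in> genideal R {}" "x \<in> carrier M"
    then have "r = \<zero>\<^bsub>R\<^esub>" "x \<in> carrier M" using Z by auto
    then show "r \<odot>\<^bsub>M\<^esub> x \<in> K" using sub_zero[OF K] by simp
  qed
  then have "adic_pow R M (genideal R {}) (carrier M) (Suc 0) \<subseteq> K" by simp
  then show ?case by (rule exI)
next
  case (insert a A)
  have Ic: "I \<subseteq> carrier R" using ideal.Icarr[OF I] by blast
  have aI: "a \<in> I" and AI: "A \<subseteq> I" using insert(4) by auto
  obtain n where n: "adic_pow R M (genideal R A) (carrier M) n \<subseteq> K" using insert(3)[OF AI] by blast
  obtain m :: nat where m: "\<forall>x\<in>carrier M. (a [^]\<^bsub>R\<^esub> m) \<odot>\<^bsub>M\<^esub> x \<in> K" using apow[OF aI] by blast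
  have ac: "a \<in> carrier R" using aI Ic by blast
  have Ac: "A \<subseteq> carrier R" using AI Ic by blast
  let ?J = "genideal R A"
  have Jid: "ideal ?J R" by (rule R.genideal_ideal[OF Ac])
  have Jc: "?J \<subseteq> carrier R" using ideal.Icarr[OF Jid] by blast
  let ?I' = "genideal R (insert a A)"
  have I'id: "ideal ?I' R" by (rule R.genideal_ideal) (use Ac ac in blast)
  have I'c: "?I' \<subseteq> carrier R" using ideal.Icarr[OF I'id] by blast
  let ?JA = "{r \<in> carrier R. \<exists>c\<in>carrier R. r \<ominus>\<^bsub>R\<^esub> c \<otimes>\<^bsub>R\<^esub> a \<in> ?J}"
  have JAid: "ideal ?JA R" by (rule gen_ideal_step[OF Jid ac])
  have "insert a A \<subseteq> ?JA"
  proof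
    fix b assume b: "b \<in> insert a A"
    show "b \<in> ?JA"
    proof (cases "b = a")
      case True
      have "a \<ominus>\<^bsub>R\<^esub> \<one>\<^bsub>R\<^esub> \<otimes>\<^bsub>R\<^esub> a = \<zero>\<^bsub>R\<^esub>" using ac by algebra
      then have "a \<ominus>\<^bsub>R\<^esub> \<one>\<^bsub>R\<^esub> \<otimes>\<^bsub>R\<^esub> a \<in> ?J"
        using additive_subgroup.zero_closed[OF ideal.axioms(1)[OF Jid]] by simp
      then show ?thesis using True ac R.one_closed by blast
    next
      case False
      then have bA: "b \<in> A" using b by simp
      have bc: "b \<in> carrier R" using bA Ac by blast
      have "b \<ominus>\<^bsub>R\<^esub> \<zero>\<^bsub>R\<^esub> \<otimes>\<^bsub>R\<^esub> a = b" using ac bc by algebra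
      moreover have "b \<in> ?J" using R.genideal_self[OF Ac] bA by blast
      ultimately have "b \<ominus>\<^bsub>R\<^esub> \<zero>\<^bsub>R\<^esub> \<otimes>\<^bsub>R\<^esub> a \<in> ?J" by simp
      then show ?thesis using bc R.zero_closed by blast
    qed
  qed
  then have I'JA: "?I' \<subseteq> ?JA" by (rule R.genideal_minimal[OF JAid])
  have apc: "a [^]\<^bsub>R\<^esub> (k::nat) \<in> carrier R" for k using ac by simp
  have scs: "submodule (sc M (a [^]\<^bsub>R\<^esub> (k::nat))) R M" for k by (rule sc_submodule[OF apc])
  have ads: "submodule (adic_pow R M ?J (sc M (a [^]\<^bsub>R\<^esub> (k::nat))) s) R M" for k s
    by (rule adic_submodule[OF scs Jc])
  define U where "U p = (\<Union>s\<in>{..p}. adic_pow R M ?J (sc M (a [^]\<^bsub>R\<^esub> (p - s))) s)" for p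
  define T where "T p = submod_span R M (U p)" for p
  have Um: "v \<in> U p" if "v \<in> adic_pow R M ?J (sc M (a [^]\<^bsub>R\<^esub> (p - s))) s" "s \<le> p" for v p s
    using that unfolding U_def by blast
  have Uc: "U p \<subseteq> carrier M" for p unfolding U_def using sub_carrier[OF ads] by blast
  have Ts: "submodule (T p) R M" for p unfolding T_def by (rule span_submodule[OF Uc])
  have UT: "U p \<subseteq> T p" for p unfolding T_def by (rule span_sup)
  have C1: "adic_pow R M ?I' (carrier M) p \<subseteq> T p" for p
  proof (induct p)
    case 0
    have "x \<in> U 0" if x: "x \<in> carrier M" for x
    proof -
      have "(a [^]\<^bsub>R\<^esub> (0::nat)) \<odot>\<^bsub>M\<^esub> x \<in> sc M (a [^]\<^bsub>R\<^esub> (0::nat))" by (rule scI[OF x])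
      then have "x \<in> adic_pow R M ?J (sc M (a [^]\<^bsub>R\<^esub> ((0::nat) - 0))) 0" using x by simp
      then show ?thesis by (rule Um) simp
    qed
    then show ?case using UT[of 0] by auto
  next
    case (Suc p)
    have h: "r \<odot>\<^bsub>M\<^esub> u \<in> T (Suc p)" if r: "r \<in> ?I'" and u: "u \<in> U p" for r u
    proof -
      obtain s where s: "s \<le> p" "u \<in> adic_pow R M ?J (sc M (a [^]\<^bsub>R\<^esub> (p - s))) s"
        using u unfolding U_def by blast
      have uc: "u \<in> carrier M" using s(2) sub_carrier[OF ads] by blast
      have "r \<in> ?JA" using r I'JA by blast
      then obtain c where c: "r \<in> carrier R" "c \<in> carrier R" "r \<ominus>\<^bsub>R\<^esub> c \<otimes>\<^bsub>R\<^esub> a \<in> ?J" by blast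
      let ?j = "r \<ominus>\<^bsub>R\<^esub> c \<otimes>\<^bsub>R\<^esub> a"
      have jc: "?j \<in> carrier R" using c ac by simp
      have "r = ?j \<oplus>\<^bsub>R\<^esub> c \<otimes>\<^bsub>R\<^esub> a" using c ac by algebra
      then have "r \<odot>\<^bsub>M\<^esub> u = (?j \<oplus>\<^bsub>R\<^esub> c \<otimes>\<^bsub>R\<^esub> a) \<odot>\<^bsub>M\<^esub> u" by simp
      also have "\<dots> = ?j \<odot>\<^bsub>M\<^esub> u \<oplus>\<^bsub>M\<^esub> (c \<otimes>\<^bsub>R\<^esub> a) \<odot>\<^bsub>M\<^esub> u"
        using jc c(2) ac uc by (simp add: smult_l_distr)
      also have "(c \<otimes>\<^bsub>R\<^esub> a) \<odot>\<^bsub>M\<^esub> u = c \<odot>\<^bsub>M\<^esub> (a \<odot>\<^bsub>M\<^esub> u)" by (rule smult_assoc1[OF c(2) ac uc])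
      finally have eq: "r \<odot>\<^bsub>M\<^esub> u = ?j \<odot>\<^bsub>M\<^esub> u \<oplus>\<^bsub>M\<^esub> c \<odot>\<^bsub>M\<^esub> (a \<odot>\<^bsub>M\<^esub> u)" .
      have "?j \<odot>\<^bsub>M\<^esub> u \<in> Phi ?J (adic_pow R M ?J (sc M (a [^]\<^bsub>R\<^esub> (p - s))) s)"
        by (rule Phi_gen[OF c(3) s(2)])
      then have "?j \<odot>\<^bsub>M\<^esub> u \<in> adic_pow R M ?J (sc M (a [^]\<^bsub>R\<^esub> (Suc p - Suc s))) (Suc s)" by simp
      then have j1: "?j \<odot>\<^bsub>M\<^esub> u \<in> T (Suc p)" using Um[of _ "Suc p" "Suc s"] s(1) UT by blast
      have "a \<odot>\<^bsub>M\<^esub> u \<in> adic_pow R M ?J (sc M (a [^]\<^bsub>R\<^esub> Suc (p - s))) s"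
        by (rule adic_shift[OF Jc ac s(2)])
      moreover have "Suc (p - s) = Suc p - s" using s(1) by simp
      ultimately have "a \<odot>\<^bsub>M\<^esub> u \<in> adic_pow R M ?J (sc M (a [^]\<^bsub>R\<^esub> (Suc p - s))) s" by simp
      then have "a \<odot>\<^bsub>M\<^esub> u \<in> T (Suc p)" using Um[of _ "Suc p" s] s(1) UT by force
      then have j2: "c \<odot>\<^bsub>M\<^esub> (a \<odot>\<^bsub>M\<^esub> u) \<in> T (Suc p)" by (rule submoduleE(4)[OF Ts c(2)])
      show ?thesis unfolding eq by (rule submoduleE(5)[OF Ts j1 j2])
    qed
    have "adic_pow R M ?I' (carrier M) (Suc p) = Phi ?I' (adic_pow R M ?I' (carrier M) p)" by simp
    also have "\<dots> \<subseteq> Phi ?I' (T p)" by (rule Phi_mono[OF I'c sub_carrier[OF Ts] Suc])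
    also have "\<dots> \<subseteq> T (Suc p)" unfolding T_def[of p] by (rule Phi_span[OF I'c Uc Ts h])
    finally show ?case .
  qed
  have C2: "T (n + m) \<subseteq> K"
    unfolding T_def
  proof (rule span_min[OF K])
    show "U (n + m) \<subseteq> K"
    proof
      fix v assume "v \<in> U (n + m)"
      then obtain s where s: "s \<le> n + m" "v \<in> adic_pow R M ?J (sc M (a [^]\<^bsub>R\<^esub> (n + m - s))) s"
        unfolding U_def by blast
      show "v \<in> K"
      proof (cases "n \<le> s")
        case True
        have "v \<in> adic_pow R M ?J (carrier M) s"
          using adic_mono[OF carrier_is_submodule Jc sub_carrier[OF scs]] s(2) by blast
        then have "v \<in> adic_pow R M ?J (carrier M) n" using adic_dec[OF carrier_is_submodule Jc True] by blast
        then show ?thesis using n by blast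
      next
        case False
        define t where "t = n + m - s"
        have tm: "m \<le> t" using False unfolding t_def by simp
        have "v \<in> sc M (a [^]\<^bsub>R\<^esub> t)" using adic_sub[OF scs Jc] s(2) unfolding t_def by blast
        then obtain x where x: "x \<in> carrier M" "v = (a [^]\<^bsub>R\<^esub> t) \<odot>\<^bsub>M\<^esub> x" by (rule scE)
        have "a [^]\<^bsub>R\<^esub> m \<otimes>\<^bsub>R\<^esub> a [^]\<^bsub>R\<^esub> (t - m) = a [^]\<^bsub>R\<^esub> (m + (t - m))" by (rule R.nat_pow_mult[OF ac])
        also have "m + (t - m) = t" using tm by simp
        finally have pe: "a [^]\<^bsub>R\<^esub> m \<otimes>\<^bsub>R\<^esub> a [^]\<^bsub>R\<^esub> (t - m) = a [^]\<^bsub>R\<^esub> t" .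
        have "(a [^]\<^bsub>R\<^esub> t) \<odot>\<^bsub>M\<^esub> x = (a [^]\<^bsub>R\<^esub> m \<otimes>\<^bsub>R\<^esub> a [^]\<^bsub>R\<^esub> (t - m)) \<odot>\<^bsub>M\<^esub> x"
          using pe by simp
        also have "\<dots> = (a [^]\<^bsub>R\<^esub> m) \<odot>\<^bsub>M\<^esub> ((a [^]\<^bsub>R\<^esub> (t - m)) \<odot>\<^bsub>M\<^esub> x)"
          by (rule smult_assoc1[OF apc apc x(1)])
        finally have "(a [^]\<^bsub>R\<^esub> t) \<odot>\<^bsub>M\<^esub> x = (a [^]\<^bsub>R\<^esub> m) \<odot>\<^bsub>M\<^esub> ((a [^]\<^bsub>R\<^esub> (t - m)) \<odot>\<^bsub>M\<^esub> x)" .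
        moreover have "(a [^]\<^bsub>R\<^esub> (t - m)) \<odot>\<^bsub>M\<^esub> x \<in> carrier M" using apc x(1) by simp
        ultimately show ?thesis using m x(2) by simp
      qed
    qed
  qed
  show ?case using C1[of "n + m"] C2 by blast
qed

end



context module begin

lemma krull:
  assumes noeth: "noetherian_ring R" and fg: "finitely_generated_module R M"
    and I: "ideal I R" and jac: "I \<subseteq> jacobson_radical R"
  shows "(\<Inter>n. adic_pow R M I (carrier M) n) = {\<zero>\<^bsub>M\<^esub>}"
proof -
  have Ic: "I \<subseteq> carrier R" using ideal.Icarr[OF I] by blast
  define N where "N = (\<Inter>n. adic_pow R M I (carrier M) n)"
  have Ns: "submodule N R M" unfolding N_def
    by (rule sub_INT[OF adic_submodule[OF carrier_is_submodule Ic]])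
  have PN: "Phi I N \<subseteq> N" by (rule Phi_sub[OF Ns Ic])
  have PNs: "submodule (Phi I N) R M" by (rule Phi_submodule[OF Ic sub_carrier[OF Ns]])
  let ?F = "{K. submodule K R M \<and> K \<inter> N = Phi I N}"
  have "Phi I N \<in> ?F" using PNs PN by blast
  then have Fne: "?F \<noteq> {}" by blast
  have Fs: "\<And>H. H \<in> ?F \<Longrightarrow> submodule H R M" by simp
  obtain K where KF: "K \<in> ?F" and Kmax: "\<forall>X\<in>?F. K \<subseteq> X \<longrightarrow> X = K"
    using MC[OF noeth fg Fne Fs] by blast
  have Ks: "submodule K R M" and KN: "K \<inter> N = Phi I N" using KF by auto
  have PK: "Phi I N \<subseteq> K" using KN by blast
  have apow: "\<exists>m::nat. \<forall>x\<in>carrier M. (a [^]\<^bsub>R\<^esub> m) \<odot>\<^bsub>M\<^esub> x \<in> K" if aI: "a \<in> I" for a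
  proof -
    have ac: "a \<in> carrier R" using aI Ic by blast
    have apc: "a [^]\<^bsub>R\<^esub> (k::nat) \<in> carrier R" for k using ac by simp
    define L where "L j = {x \<in> carrier M. (a [^]\<^bsub>R\<^esub> (j::nat)) \<odot>\<^bsub>M\<^esub> x \<in> K}" for j
    have Ls: "submodule (L j) R M" for j unfolding L_def by (rule colon_submodule[OF Ks apc])
    have Gne: "range L \<noteq> {}" by blast
    have Gs: "\<And>H. H \<in> range L \<Longrightarrow> submodule H R M" using Ls by blast
    obtain H where H: "H \<in> range L" and Hmax: "\<forall>X\<in>range L. H \<subseteq> X \<longrightarrow> X = H"
      using MC[OF noeth fg Gne Gs] by blast
    obtain m where Hm: "H = L m" using H by blast
    have LmS: "L m \<subseteq> L (Suc m)"
    proof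
      fix x assume "x \<in> L m"
      then have x: "x \<in> carrier M" "(a [^]\<^bsub>R\<^esub> m) \<odot>\<^bsub>M\<^esub> x \<in> K" unfolding L_def by simp_all
      have "a \<odot>\<^bsub>M\<^esub> ((a [^]\<^bsub>R\<^esub> m) \<odot>\<^bsub>M\<^esub> x) \<in> K" by (rule submoduleE(4)[OF Ks ac x(2)])
      then have "(a [^]\<^bsub>R\<^esub> Suc m) \<odot>\<^bsub>M\<^esub> x \<in> K" using pow_step[OF ac x(1)] by simp
      then show "x \<in> L (Suc m)" unfolding L_def using x(1) by simp
    qed
    have LSm: "L (Suc m) = L m" using Hmax Hm LmS by blast
    let ?Km = "msum M (sc M (a [^]\<^bsub>R\<^esub> m)) K"
    have Kms: "submodule ?Km R M" by (rule msum_submodule[OF sc_submodule[OF apc] Ks])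
    have KKm: "K \<subseteq> ?Km" by (rule msum_upper2[OF sc_submodule[OF apc] sub_carrier[OF Ks]])
    have "?Km \<inter> N \<subseteq> Phi I N"
    proof
      fix y assume y: "y \<in> ?Km \<inter> N"
      then obtain u k where uk: "u \<in> sc M (a [^]\<^bsub>R\<^esub> m)" "k \<in> K" "y = u \<oplus>\<^bsub>M\<^esub> k"
        by (blast elim: msumE)
      obtain x where x: "x \<in> carrier M" "u = (a [^]\<^bsub>R\<^esub> m) \<odot>\<^bsub>M\<^esub> x" using uk(1) by (rule scE)
      have uc: "u \<in> carrier M" using x apc by simp
      have kc: "k \<in> carrier M" using uk(2) sub_carrier[OF Ks] by blast
      have yN: "y \<in> N" using y by blast
      have "a \<odot>\<^bsub>M\<^esub> y \<in> Phi I N" by (rule Phi_gen[OF aI yN])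
      then have ayK: "a \<odot>\<^bsub>M\<^esub> y \<in> K" using PK by blast
      have ay: "a \<odot>\<^bsub>M\<^esub> y = a \<odot>\<^bsub>M\<^esub> u \<oplus>\<^bsub>M\<^esub> a \<odot>\<^bsub>M\<^esub> k" unfolding uk(3) by (rule smult_r_distr[OF ac uc kc])
      have akK: "a \<odot>\<^bsub>M\<^esub> k \<in> K" by (rule submoduleE(4)[OF Ks ac uk(2)])
      have "a \<odot>\<^bsub>M\<^esub> y \<ominus>\<^bsub>M\<^esub> a \<odot>\<^bsub>M\<^esub> k = a \<odot>\<^bsub>M\<^esub> u"
        unfolding ay by (rule plus_minus_cancel2) (use ac uc kc in simp_all)
      moreover have "a \<odot>\<^bsub>M\<^esub> y \<ominus>\<^bsub>M\<^esub> a \<odot>\<^bsub>M\<^esub> k \<in> K" by (rule sub_minus[OF Ks ayK akK])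
      ultimately have "a \<odot>\<^bsub>M\<^esub> u \<in> K" by simp
      then have "(a [^]\<^bsub>R\<^esub> Suc m) \<odot>\<^bsub>M\<^esub> x \<in> K" using pow_step[OF ac x(1)] x(2) by simp
      then have "x \<in> L (Suc m)" unfolding L_def using x(1) by simp
      then have "x \<in> L m" using LSm by simp
      then have "u \<in> K" unfolding L_def using x(2) by simp
      then have "y \<in> K" unfolding uk(3) by (rule submoduleE(5)[OF Ks _ uk(2)])
      then show "y \<in> Phi I N" using yN KN by blast
    qed
    moreover have "Phi I N \<subseteq> ?Km \<inter> N" using PK KKm PN by blast
    ultimately have "?Km \<inter> N = Phi I N" by (rule antisym)
    then have "?Km \<in> ?F" using Kms by blast
    then have "?Km = K" using Kmax KKm by blast
    moreover have "sc M (a [^]\<^bsub>R\<^esub> m) \<subseteq> ?Km"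
      by (rule msum_upper1[OF Ks sub_carrier[OF sc_submodule[OF apc]]])
    ultimately have "sc M (a [^]\<^bsub>R\<^esub> m) \<subseteq> K" by simp
    then show ?thesis using scI by blast
  qed
  obtain A where A: "A \<subseteq> carrier R" "finite A" "I = genideal R A"
    using noetherian_ring.finetely_gen[OF noeth I] by blast
  have AI: "A \<subseteq> I" using R.genideal_self[OF A(1)] A(3) by simp
  obtain n where n: "adic_pow R M (genideal R A) (carrier M) n \<subseteq> K"
    using krull_K[OF Ks I apow A(2) AI] by blast
  have "N \<subseteq> K" using n A(3) unfolding N_def by blast
  then have "Phi I N = N" using KN by blast
  then have "N = {\<zero>\<^bsub>M\<^esub>}" by (rule nakayama[OF noeth fg I jac Ns])
  then show ?thesis unfolding N_def .
qed

end

theorem lemma1p1: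
  fixes R :: "('a, 'c) ring_scheme" and M :: "('a, 'b, 'd) module_scheme" and I :: "'a set"
  assumes "cring R" and "noetherian_ring R"
    and "ideal I R" and "I \<subseteq> jacobson_radical R"
    and "module R M" and "finitely_generated_module R M"
  shows "\<exists>!C. submodule C R M \<and> adically_complete R M I C \<and>
           (\<forall>N. submodule N R M \<and> adically_complete R M I N \<and> C \<subseteq> N \<longrightarrow> N = C)"
proof -
  interpret module R M by (rule assms(5))
  note noeth = assms(2) and I = assms(3) and jac = assms(4) and fg = assms(6)
  have Ic: "I \<subseteq> carrier R" using ideal.Icarr[OF I] by blast
  have sep: "(\<Inter>n. adic_pow R M I (carrier M) n) = {\<zero>\<^bsub>M\<^esub>}" by (rule krull[OF noeth fg I jac])
  let ?F = "{C. submodule C R M \<and> adically_complete R M I C}"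
  have "{\<zero>\<^bsub>M\<^esub>} \<in> ?F" using zero_submodule zero_complete[OF Ic] by blast
  then have Fne: "?F \<noteq> {}" by blast
  have Fs: "\<And>H. H \<in> ?F \<Longrightarrow> submodule H R M" by simp
  obtain C where CF: "C \<in> ?F" and Cmax: "\<forall>X\<in>?F. C \<subseteq> X \<longrightarrow> X = C"
    using MC[OF noeth fg Fne Fs] by blast
  have Cs: "submodule C R M" and Cc: "adically_complete R M I C" using CF by auto
  have great: "N \<subseteq> C" if Ns: "submodule N R M" and Nc: "adically_complete R M I N" for N
  proof -
    have "msum M C N \<in> ?F"
      using msum_submodule[OF Cs Ns] complete_msum[OF Ic Cs Ns Cc Nc sep] by blast
    moreover have "C \<subseteq> msum M C N" by (rule msum_upper1[OF Ns sub_carrier[OF Cs]])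
    ultimately have "msum M C N = C" using Cmax by blast
    moreover have "N \<subseteq> msum M C N" by (rule msum_upper2[OF Cs sub_carrier[OF Ns]])
    ultimately show ?thesis by simp
  qed
  show ?thesis
  proof (rule ex1I[of _ C])
    show "submodule C R M \<and> adically_complete R M I C \<and>
        (\<forall>N. submodule N R M \<and> adically_complete R M I N \<and> C \<subseteq> N \<longrightarrow> N = C)"
      using Cs Cc great by blast
    fix C' assume C': "submodule C' R M \<and> adically_complete R M I C' \<and>
        (\<forall>N. submodule N R M \<and> adically_complete R M I N \<and> C' \<subseteq> N \<longrightarrow> N = C')"
    then have "C' \<subseteq> C" using great by blast
    then show "C' = C" using C' Cs Cc by blast
  qed
qed


end
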